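(* Let $\Phi=(G,\varphi)$ be a complex unit gain graph and let $C_p^{\varphi}$ be a pendant cycle of $\Phi$ of order $p$, with $v$ the unique vertex of $C_p$ of degree $3$ in $G$. Let $F^{\varphi}=(F,\varphi)=\Phi-C_p^{\varphi}$ (delete all vertices of $C_p$) and $H^{\varphi}=(H,\varphi)=F^{\varphi}+v$ (the induced subgraph on $V(F)\cup\{v\}$). If $r(\Phi)=r(G)-2\theta(G)$, then (a) $C_p^{\varphi}$ is of Type A with $p\equiv 2\pmod 4$; (b) $r(H^{\varphi})=r(H)-2\theta(H)$ and $r(F^{\varphi})=r(F)-2\theta(F)$; (c) $r(\Phi)=p-2+r(F^{\varphi})$, $r(F^{\varphi})=r(H^{\varphi})$, $r(G)=p+r(H)$ and $r(F)=r(H)$.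
   Context: A complex unit gain graph $\Phi=(G,\varphi)$ consists of a finite simple graph $G$ with vertex set $\{v_1,\dots,v_n\}$ and a gain function $\varphi$ assigning to each oriented edge $e_{ij}$ ($v_iv_j\in E(G)$) a complex number of modulus $1$ with $\varphi(e_{ji})=\overline{\varphi(e_{ij})}$. $A(\Phi)$ is the Hermitian matrix with $(i,j)$ entry $\varphi(e_{ij})$ if $v_iv_j\in E(G)$ and $0$ otherwise; $r(\Phi)$ is its rank; $r(\cdot)$ of a simple graph is the rank of its $0$-$1$ adjacency matrix. Induced subgraphs of $\Phi$ carry the gains of $\Phi$. $\theta(G)=|E(G)|-|V(G)|+\omega(G)$, $\omega(G)$ the number of components. A pendant cycle of $G$ is an induced subgraph $C_p$ that is a cycle and has a unique vertex of degree $3$ in $G$ (its other vertices having degree $2$ in $G$). For a gain cycle with vertices $v_1,\dots,v_p$ in cyclic order, $\varphi(C_p)=\varphi(e_{12})\cdots\varphi(e_{p1})$; for $p$ even it is of Type A if $\varphi(C_p)=(-1)^{p/2}$. *)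

theory Defs
  imports Complex_Main
begin

text \<open>Matrices indexed by a finite vertex set S are functions
  'a => 'a => complex; only the entries on S x S matter.\<close>

definition simple_graph :: "'a set \<Rightarrow> ('a \<Rightarrow> 'a \<Rightarrow> bool) \<Rightarrow> bool" where
  "simple_graph V E \<longleftrightarrow> finite V \<and> (\<forall>x y. E x y \<longrightarrow> x \<in> V \<and> y \<in> V)
     \<and> (\<forall>x y. E x y \<longrightarrow> E y x) \<and> (\<forall>x. \<not> E x x)"

definition unit_gain :: "('a \<Rightarrow> 'a \<Rightarrow> bool) \<Rightarrow> ('a \<Rightarrow> 'a \<Rightarrow> complex) \<Rightarrow> bool" where
  "unit_gain E \<phi> \<longleftrightarrow> (\<forall>x y. E x y \<longrightarrow> cmod (\<phi> x y) = 1 \<and> \<phi> y x = cnj (\<phi> x y))"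

definition lin_indep_cols :: "'a set \<Rightarrow> ('a \<Rightarrow> 'a \<Rightarrow> complex) \<Rightarrow> 'a set \<Rightarrow> bool" where
  "lin_indep_cols S M J \<longleftrightarrow>
     (\<forall>c :: 'a \<Rightarrow> complex. (\<forall>i\<in>S. (\<Sum>j\<in>J. c j * M i j) = 0) \<longrightarrow> (\<forall>j\<in>J. c j = 0))"

definition mat_rank :: "'a set \<Rightarrow> ('a \<Rightarrow> 'a \<Rightarrow> complex) \<Rightarrow> nat" where
  "mat_rank S M = Max (card ` {J. J \<subseteq> S \<and> lin_indep_cols S M J})"

definition adj_mat :: "('a \<Rightarrow> 'a \<Rightarrow> bool) \<Rightarrow> 'a \<Rightarrow> 'a \<Rightarrow> complex" where
  "adj_mat E i j = (if E i j then 1 else 0)"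

definition gain_adj_mat :: "('a \<Rightarrow> 'a \<Rightarrow> bool) \<Rightarrow> ('a \<Rightarrow> 'a \<Rightarrow> complex) \<Rightarrow> 'a \<Rightarrow> 'a \<Rightarrow> complex" where
  "gain_adj_mat E \<phi> i j = (if E i j then \<phi> i j else 0)"

definition graph_rank :: "'a set \<Rightarrow> ('a \<Rightarrow> 'a \<Rightarrow> bool) \<Rightarrow> nat" where
  "graph_rank S E = mat_rank S (adj_mat E)"

definition gain_rank :: "'a set \<Rightarrow> ('a \<Rightarrow> 'a \<Rightarrow> bool) \<Rightarrow> ('a \<Rightarrow> 'a \<Rightarrow> complex) \<Rightarrow> nat" where
  "gain_rank S E \<phi> = mat_rank S (gain_adj_mat E \<phi>)"

definition induced_edges :: "'a set \<Rightarrow> ('a \<Rightarrow> 'a \<Rightarrow> bool) \<Rightarrow> 'a \<Rightarrow> 'a \<Rightarrow> bool" where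
  "induced_edges S E x y \<longleftrightarrow> x \<in> S \<and> y \<in> S \<and> E x y"

definition num_edges :: "'a set \<Rightarrow> ('a \<Rightarrow> 'a \<Rightarrow> bool) \<Rightarrow> nat" where
  "num_edges S E = card {{x, y} | x y. induced_edges S E x y}"

definition components :: "'a set \<Rightarrow> ('a \<Rightarrow> 'a \<Rightarrow> bool) \<Rightarrow> 'a set set" where
  "components S E = (\<lambda>v. {u \<in> S. (induced_edges S E)\<^sup>*\<^sup>* v u}) ` S"

definition num_components :: "'a set \<Rightarrow> ('a \<Rightarrow> 'a \<Rightarrow> bool) \<Rightarrow> nat" where
  "num_components S E = card (components S E)"

definition theta :: "'a set \<Rightarrow> ('a \<Rightarrow> 'a \<Rightarrow> bool) \<Rightarrow> int" where
  "theta S E = int (num_edges S E) - int (card S) + int (num_components S E)"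

definition degree :: "'a set \<Rightarrow> ('a \<Rightarrow> 'a \<Rightarrow> bool) \<Rightarrow> 'a \<Rightarrow> nat" where
  "degree V E x = card {y \<in> V. E x y}"

definition induced_cycle :: "'a set \<Rightarrow> ('a \<Rightarrow> 'a \<Rightarrow> bool) \<Rightarrow> 'a list \<Rightarrow> bool" where
  "induced_cycle V E cyc \<longleftrightarrow> distinct cyc \<and> length cyc \<ge> 3 \<and> set cyc \<subseteq> V
     \<and> (\<forall>i < length cyc. E (cyc ! i) (cyc ! ((i + 1) mod length cyc)))
     \<and> (\<forall>x \<in> set cyc. degree (set cyc) E x = 2)"

definition pendant_cycle :: "'a set \<Rightarrow> ('a \<Rightarrow> 'a \<Rightarrow> bool) \<Rightarrow> 'a list \<Rightarrow> 'a \<Rightarrow> bool" where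
  "pendant_cycle V E cyc v \<longleftrightarrow> induced_cycle V E cyc \<and> v \<in> set cyc
     \<and> degree V E v = 3 \<and> (\<forall>x \<in> set cyc - {v}. degree V E x = 2)"

definition cycle_gain :: "('a \<Rightarrow> 'a \<Rightarrow> complex) \<Rightarrow> 'a list \<Rightarrow> complex" where
  "cycle_gain \<phi> cyc = (\<Prod>i<length cyc. \<phi> (cyc ! i) (cyc ! ((i + 1) mod length cyc)))"

definition type_A :: "('a \<Rightarrow> 'a \<Rightarrow> complex) \<Rightarrow> 'a list \<Rightarrow> bool" where
  "type_A \<phi> cyc \<longleftrightarrow> even (length cyc) \<and> cycle_gain \<phi> cyc = (-1) ^ (length cyc div 2)"

end

theory Submission
  imports Defs
begin

definition rank2 :: "'a set \<Rightarrow> 'a set \<Rightarrow> ('a \<Rightarrow> 'a \<Rightarrow> complex) \<Rightarrow> nat" where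
  "rank2 R C M = Max (card ` {J. J \<subseteq> C \<and> lin_indep_cols R M J})"

lemma mat_rank_rank2: "mat_rank S M = rank2 S S M"
  by (simp add: mat_rank_def rank2_def)

lemma indep_empty: "lin_indep_cols R M {}"
  by (simp add: lin_indep_cols_def)

lemma rank2_fin: "finite C \<Longrightarrow> finite (card ` {J. J \<subseteq> C \<and> lin_indep_cols R M J})"
proof -
  assume "finite C"
  have "{J. J \<subseteq> C \<and> lin_indep_cols R M J} \<subseteq> Pow C" by blast
  then have "finite {J. J \<subseteq> C \<and> lin_indep_cols R M J}"
    using finite_subset finite_Pow_iff \<open>finite C\<close> by blast
  then show ?thesis by (rule finite_imageI)
qed

lemma rank2_ge:
  assumes "finite C" "J \<subseteq> C" "lin_indep_cols R M J"
  shows "card J \<le> rank2 R C M"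
proof -
  have "card J \<in> card ` {J. J \<subseteq> C \<and> lin_indep_cols R M J}" using assms(2,3) by blast
  then show ?thesis unfolding rank2_def by (rule Max_ge[OF rank2_fin[OF assms(1)]])
qed

lemma rank2_obtain:
  assumes "finite C"
  obtains J where "J \<subseteq> C" "lin_indep_cols R M J" "card J = rank2 R C M"
proof -
  have e: "{} \<in> {J. J \<subseteq> C \<and> lin_indep_cols R M J}" by (simp add: indep_empty)
  have ne: "card ` {J. J \<subseteq> C \<and> lin_indep_cols R M J} \<noteq> {}"
    using e by (simp only: image_is_empty) (rule notI, simp)
  have "rank2 R C M \<in> card ` {J. J \<subseteq> C \<and> lin_indep_cols R M J}"
    unfolding rank2_def using Max_in[OF rank2_fin[OF assms] ne] .
  then obtain J where "J \<in> {J. J \<subseteq> C \<and> lin_indep_cols R M J}" "rank2 R C M = card J"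
    by (rule imageE)
  then have "J \<subseteq> C" "lin_indep_cols R M J" "card J = rank2 R C M" by simp_all
  then show ?thesis by (rule that)
qed

lemma rank2_le_card: "finite C \<Longrightarrow> rank2 R C M \<le> card C"
proof -
  assume "finite C"
  then obtain J where J: "J \<subseteq> C" "lin_indep_cols R M J" "card J = rank2 R C M"
    by (rule rank2_obtain)
  then show ?thesis using card_mono[OF \<open>finite C\<close> J(1)] J(3) by simp
qed

lemma indep_mono_rows: "R \<subseteq> R' \<Longrightarrow> lin_indep_cols R M J \<Longrightarrow> lin_indep_cols R' M J"
  unfolding lin_indep_cols_def
proof (intro allI impI)
  fix c :: "'a \<Rightarrow> complex"
  assume a: "R \<subseteq> R'" "\<forall>c. (\<forall>i\<in>R. (\<Sum>j\<in>J. c j * M i j) = 0) \<longrightarrow> (\<forall>j\<in>J. c j = 0)"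
    "\<forall>i\<in>R'. (\<Sum>j\<in>J. c j * M i j) = 0"
  then have "\<forall>i\<in>R. (\<Sum>j\<in>J. c j * M i j) = 0" by (simp add: subset_iff)
  then show "\<forall>j\<in>J. c j = 0" using a(2) by simp
qed

lemma indep_subset:
  assumes "finite J" "J' \<subseteq> J" "lin_indep_cols R M J"
  shows "lin_indep_cols R M J'"
  unfolding lin_indep_cols_def
proof (intro allI impI ballI)
  fix c :: "'a \<Rightarrow> complex" and j
  assume h: "\<forall>i\<in>R. (\<Sum>j\<in>J'. c j * M i j) = 0" and j: "j \<in> J'"
  define d where "d = (\<lambda>j. if j \<in> J' then c j else 0)"
  have "\<forall>i\<in>R. (\<Sum>j\<in>J. d j * M i j) = 0"
  proof
    fix i assume "i \<in> R"
    have "(\<Sum>j\<in>J. d j * M i j) = (\<Sum>j\<in>J'. d j * M i j)"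
      using assms(1,2) by (intro sum.mono_neutral_right) (auto simp: d_def)
    also have "\<dots> = (\<Sum>j\<in>J'. c j * M i j)" by (simp add: d_def)
    finally show "(\<Sum>j\<in>J. d j * M i j) = 0" using h \<open>i \<in> R\<close> by simp
  qed
  then have "d j = 0" using assms(3) j assms(2) unfolding lin_indep_cols_def by blast
  then show "c j = 0" using j by (simp add: d_def)
qed

lemma indep_cong:
  assumes "\<forall>i\<in>R. \<forall>j\<in>J. M i j = M' i j"
  shows "lin_indep_cols R M J = lin_indep_cols R M' J"
proof -
  have "\<And>c i. i \<in> R \<Longrightarrow> (\<Sum>j\<in>J. c j * M i j) = (\<Sum>j\<in>J. c j * M' i j)"
    using assms by (intro sum.cong) auto
  then show ?thesis unfolding lin_indep_cols_def by auto
qed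

lemma rank2_cong:
  assumes "\<forall>i\<in>R. \<forall>j\<in>C. M i j = M' i j"
  shows "rank2 R C M = rank2 R C M'"
proof -
  have "{J. J \<subseteq> C \<and> lin_indep_cols R M J} = {J. J \<subseteq> C \<and> lin_indep_cols R M' J}"
    using indep_cong[of R _ M M'] assms by blast
  then show ?thesis unfolding rank2_def by simp
qed

lemma rank2_mono_rows:
  assumes "finite C" "R \<subseteq> R'"
  shows "rank2 R C M \<le> rank2 R' C M"
proof -
  obtain J where "J \<subseteq> C" "lin_indep_cols R M J" "card J = rank2 R C M"
    by (rule rank2_obtain[OF assms(1)])
  then have "lin_indep_cols R' M J" using indep_mono_rows[OF assms(2)] by blast
  then have "card J \<le> rank2 R' C M" using rank2_ge[OF assms(1) \<open>J \<subseteq> C\<close>] by blast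
  then show ?thesis using \<open>card J = rank2 R C M\<close> by simp
qed

lemma rank2_mono_cols:
  assumes "finite C'" "C \<subseteq> C'"
  shows "rank2 R C M \<le> rank2 R C' M"
proof -
  have "finite C" using assms finite_subset by blast
  obtain J where "J \<subseteq> C" "lin_indep_cols R M J" "card J = rank2 R C M"
    by (rule rank2_obtain[OF \<open>finite C\<close>])
  then have "card J \<le> rank2 R C' M" using rank2_ge[OF assms(1)] assms(2) by blast
  then show ?thesis using \<open>card J = rank2 R C M\<close> by simp
qed

lemma rank2_del_col:
  assumes "finite C"
  shows "rank2 R C M \<le> rank2 R (C - {y}) M + 1"
proof -
  obtain J where J: "J \<subseteq> C" "lin_indep_cols R M J" "card J = rank2 R C M"
    by (rule rank2_obtain[OF assms(1)])
  have fJ: "finite J" using J(1) assms finite_subset by blast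
  have "lin_indep_cols R M (J - {y})" using indep_subset[OF fJ _ J(2)] by blast
  then have "card (J - {y}) \<le> rank2 R (C - {y}) M"
    using J(1) assms by (intro rank2_ge) auto
  moreover have "card J \<le> card (J - {y}) + 1"
    using fJ card_Diff_singleton_if[of J y] card_0_eq[of J] by (cases "y \<in> J") auto
  ultimately show ?thesis using J(3) by linarith
qed


lemma sum_drop:
  assumes "finite J" "j0 \<in> J"
  shows "(\<Sum>j\<in>J. (if j = j0 then 0 else d j) * (N j :: complex)) = (\<Sum>j\<in>J - {j0}. d j * N j)"
proof -
  have "(\<Sum>j\<in>J. (if j = j0 then 0 else d j) * N j)
      = (if j0 = j0 then 0 else d j0) * N j0 + (\<Sum>j\<in>J - {j0}. (if j = j0 then 0 else d j) * N j)"
    using sum.remove[OF assms] by blast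
  also have "\<dots> = (\<Sum>j\<in>J - {j0}. d j * N j)"
  proof -
    have "(\<Sum>j\<in>J - {j0}. (if j = j0 then 0 else d j) * N j) = (\<Sum>j\<in>J - {j0}. d j * N j)"
      by (rule sum.cong) auto
    then show ?thesis by simp
  qed
  finally show ?thesis .
qed

lemma sum_insert_col:
  assumes "finite J" "y \<notin> J"
  shows "(\<Sum>j\<in>insert y J. c j * (N j :: complex)) = c y * N y + (\<Sum>j\<in>J. c j * N j)"
  using assms by simp

lemma one_row:
  assumes "finite J" "lin_indep_cols R M J"
  shows "\<exists>J'. J' \<subseteq> J \<and> lin_indep_cols (R - {x}) M J' \<and> card J \<le> card J' + 1"
proof (cases "lin_indep_cols (R - {x}) M J")
  case True
  then show ?thesis by (intro exI[of _ J]) simp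
next
  case False
  then obtain c j0 where c: "\<forall>i\<in>R - {x}. (\<Sum>j\<in>J. c j * M i j) = 0" "j0 \<in> J" "c j0 \<noteq> 0"
    unfolding lin_indep_cols_def by auto
  define \<alpha> where "\<alpha> = (\<Sum>j\<in>J. c j * M x j)"
  have a0: "\<alpha> \<noteq> 0"
  proof
    assume "\<alpha> = 0"
    then have "\<forall>i\<in>R. (\<Sum>j\<in>J. c j * M i j) = 0" using c(1) \<alpha>_def by auto
    then show False using assms(2) c(2,3) unfolding lin_indep_cols_def by auto
  qed
  define J' where "J' = J - {j0}"
  have ind: "lin_indep_cols (R - {x}) M J'"
    unfolding lin_indep_cols_def
  proof (intro allI impI ballI)
    fix d :: "'a \<Rightarrow> complex" and j
    assume hd: "\<forall>i\<in>R - {x}. (\<Sum>j\<in>J'. d j * M i j) = 0" and j: "j \<in> J'"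
    define \<beta> where "\<beta> = (\<Sum>j\<in>J'. d j * M x j)"
    define e where "e = (\<lambda>j. (if j = j0 then 0 else d j) - (\<beta> / \<alpha>) * c j)"
    have se: "(\<Sum>j\<in>J. e j * M i j) = (\<Sum>j\<in>J'. d j * M i j) - (\<beta> / \<alpha>) * (\<Sum>j\<in>J. c j * M i j)" for i
    proof -
      have "(\<Sum>j\<in>J. e j * M i j) = (\<Sum>j\<in>J. (if j = j0 then 0 else d j) * M i j)
          - (\<Sum>j\<in>J. (\<beta> / \<alpha>) * c j * M i j)"
        unfolding e_def by (simp add: algebra_simps sum_subtractf)
      also have "\<dots> = (\<Sum>j\<in>J'. d j * M i j) - (\<beta> / \<alpha>) * (\<Sum>j\<in>J. c j * M i j)"
        using sum_drop[OF assms(1) c(2), of d "\<lambda>j. M i j"]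
        by (simp add: J'_def sum_distrib_left mult.assoc)
      finally show ?thesis .
    qed
    have "\<forall>i\<in>R. (\<Sum>j\<in>J. e j * M i j) = 0"
    proof
      fix i assume "i \<in> R"
      show "(\<Sum>j\<in>J. e j * M i j) = 0"
      proof (cases "i = x")
        case True
        then show ?thesis using se[of x] a0 by (simp add: \<beta>_def \<alpha>_def[symmetric])
      next
        case False
        then show ?thesis using se[of i] hd c(1) \<open>i \<in> R\<close> by simp
      qed
    qed
    then have e0: "\<forall>j\<in>J. e j = 0" using assms(2) unfolding lin_indep_cols_def by blast
    then have "e j0 = 0" using c(2) by blast
    then have "\<beta> = 0" using c(3) a0 by (simp add: e_def)
    moreover have "j \<in> J" "j \<noteq> j0" using j by (auto simp: J'_def)
    moreover have "e j = 0" using e0 \<open>j \<in> J\<close> by blast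
    ultimately show "d j = 0" by (simp add: e_def)
  qed
  have "card J = card J' + 1"
    using assms(1) c(2) by (simp add: J'_def card_Diff_singleton)
      (metis Suc_pred card_gt_0_iff empty_iff)
  then show ?thesis using ind by (intro exI[of _ J']) (auto simp: J'_def)
qed

lemma rank2_del_row:
  assumes "finite C"
  shows "rank2 R C M \<le> rank2 (R - {x}) C M + 1"
proof -
  obtain J where J: "J \<subseteq> C" "lin_indep_cols R M J" "card J = rank2 R C M"
    by (rule rank2_obtain[OF assms(1)])
  have fJ: "finite J" using J(1) assms finite_subset by blast
  obtain J' where J': "J' \<subseteq> J" "lin_indep_cols (R - {x}) M J'" "card J \<le> card J' + 1"
    using one_row[OF fJ J(2), of x] by blast
  have "card J' \<le> rank2 (R - {x}) C M" using J'(1,2) J(1) by (intro rank2_ge[OF assms]) auto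
  then show ?thesis using J(3) J'(3) by linarith
qed

lemma rank2_set_cong:
  assumes "\<And>J. J \<subseteq> C \<Longrightarrow> lin_indep_cols R M J = lin_indep_cols R' M' J"
  shows "rank2 R C M = rank2 R' C M'"
proof -
  have "{J. J \<subseteq> C \<and> lin_indep_cols R M J} = {J. J \<subseteq> C \<and> lin_indep_cols R' M' J}"
    using assms by auto
  then show ?thesis unfolding rank2_def by simp
qed

lemma rank2_zero_row:
  assumes "\<forall>j\<in>C. M x j = 0"
  shows "rank2 R C M = rank2 (R - {x}) C M"
proof (rule rank2_set_cong)
  fix J assume J: "J \<subseteq> C"
  have "\<And>c. (\<Sum>j\<in>J. c j * M x j) = 0" using assms J by (intro sum.neutral) auto
  then show "lin_indep_cols R M J = lin_indep_cols (R - {x}) M J"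
    unfolding lin_indep_cols_def by (metis Diff_iff singletonD)
qed

lemma rank2_zero_col:
  assumes "finite C" "\<forall>i\<in>R. M i y = 0"
  shows "rank2 R C M = rank2 R (C - {y}) M"
proof (rule antisym)
  obtain J where J: "J \<subseteq> C" "lin_indep_cols R M J" "card J = rank2 R C M"
    by (rule rank2_obtain[OF assms(1)])
  have fJ: "finite J" using J(1) assms finite_subset by blast
  have "y \<notin> J"
  proof
    assume y: "y \<in> J"
    define c where "c = (\<lambda>j. if j = y then (1::complex) else 0)"
    have "\<forall>i\<in>R. (\<Sum>j\<in>J. c j * M i j) = 0"
    proof
      fix i assume "i \<in> R"
      have "(\<Sum>j\<in>J. c j * M i j) = (\<Sum>j\<in>J. if j = y then M i j else 0)"
        by (intro sum.cong) (auto simp: c_def)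
      also have "\<dots> = M i y" using y fJ by simp
      finally show "(\<Sum>j\<in>J. c j * M i j) = 0" using assms(2) \<open>i \<in> R\<close> by simp
    qed
    then have "c y = 0" using J(2) y unfolding lin_indep_cols_def by blast
    then show False by (simp add: c_def)
  qed
  then have "card J \<le> rank2 R (C - {y}) M"
    using J assms(1) by (intro rank2_ge) auto
  then show "rank2 R C M \<le> rank2 R (C - {y}) M" using J(3) by simp
next
  show "rank2 R (C - {y}) M \<le> rank2 R C M" using assms(1) by (intro rank2_mono_cols) auto
qed

lemma rank2_row_op:
  assumes "k \<in> R" "i \<in> R" "k \<noteq> i"
  shows "rank2 R C (M(k := (\<lambda>j. M k j + lam * M i j))) = rank2 R C M"
proof (rule rank2_set_cong)
  fix J :: "'a set"
  let ?M' = "M(k := (\<lambda>j. M k j + lam * M i j))"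
  have s: "(\<Sum>j\<in>J. c j * ?M' k j) = (\<Sum>j\<in>J. c j * M k j) + lam * (\<Sum>j\<in>J. c j * M i j)" for c
    by (simp add: algebra_simps sum.distrib sum_distrib_left)
  have o: "l \<noteq> k \<Longrightarrow> (\<Sum>j\<in>J. c j * ?M' l j) = (\<Sum>j\<in>J. c j * M l j)" for c l by simp
  have "(\<forall>l\<in>R. (\<Sum>j\<in>J. c j * ?M' l j) = 0) \<longleftrightarrow> (\<forall>l\<in>R. (\<Sum>j\<in>J. c j * M l j) = 0)" for c
  proof
    assume h: "\<forall>l\<in>R. (\<Sum>j\<in>J. c j * ?M' l j) = 0"
    have hi: "(\<Sum>j\<in>J. c j * M i j) = 0" using h assms o[of i c] by auto
    show "\<forall>l\<in>R. (\<Sum>j\<in>J. c j * M l j) = 0"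
    proof
      fix l assume "l \<in> R"
      show "(\<Sum>j\<in>J. c j * M l j) = 0"
      proof (cases "l = k")
        case True
        have "(\<Sum>j\<in>J. c j * ?M' k j) = 0" using h assms(1) by blast
        then show ?thesis using True s[of c] hi by simp
      next
        case False
        have "(\<Sum>j\<in>J. c j * ?M' l j) = 0" using h \<open>l \<in> R\<close> by blast
        then show ?thesis using o[OF False, of c] by simp
      qed
    qed
  next
    assume h: "\<forall>l\<in>R. (\<Sum>j\<in>J. c j * M l j) = 0"
    show "\<forall>l\<in>R. (\<Sum>j\<in>J. c j * ?M' l j) = 0"
    proof
      fix l assume "l \<in> R"
      show "(\<Sum>j\<in>J. c j * ?M' l j) = 0"
      proof (cases "l = k")
        case True
        have "(\<Sum>j\<in>J. c j * M k j) = 0" "(\<Sum>j\<in>J. c j * M i j) = 0" using h assms(1,2) by blast+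
        then show ?thesis using True s[of c] by simp
      next
        case False then show ?thesis using h \<open>l \<in> R\<close> o[of l c] by simp
      qed
    qed
  qed
  then show "lin_indep_cols R ?M' J = lin_indep_cols R M J"
    unfolding lin_indep_cols_def by simp
qed


lemma card_insert_fin: "finite J \<Longrightarrow> y \<notin> J \<Longrightarrow> card (insert y J) = card J + 1"
  by simp

lemma card_remove_fin: "finite J \<Longrightarrow> y \<in> J \<Longrightarrow> card J = card (J - {y}) + 1"
  by (metis card.remove plus_1_eq_Suc add.commute)

lemma pivot_row:
  assumes "finite C" "x \<in> R" "y \<in> C" "M x y \<noteq> 0" "\<forall>j\<in>C. j \<noteq> y \<longrightarrow> M x j = 0"
  shows "rank2 R C M = rank2 (R - {x}) (C - {y}) M + 1"
proof (rule antisym)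
  obtain J where J: "J \<subseteq> C" "lin_indep_cols R M J" "card J = rank2 R C M"
    by (rule rank2_obtain[OF assms(1)])
  have fJ: "finite J" using J(1) assms finite_subset by blast
  show "rank2 R C M \<le> rank2 (R - {x}) (C - {y}) M + 1"
  proof (cases "y \<in> J")
    case True
    have "lin_indep_cols (R - {x}) M (J - {y})"
      unfolding lin_indep_cols_def
    proof (intro allI impI ballI)
      fix c :: "'a \<Rightarrow> complex" and j
      assume h: "\<forall>i\<in>R - {x}. (\<Sum>j\<in>J - {y}. c j * M i j) = 0" and j: "j \<in> J - {y}"
      define c' where "c' = (\<lambda>j. if j = y then 0 else c j)"
      have sc: "(\<Sum>j\<in>J. c' j * M i j) = (\<Sum>j\<in>J - {y}. c j * M i j)" for i
        unfolding c'_def by (rule sum_drop[OF fJ True])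
      have "(\<Sum>j\<in>J - {y}. c j * M x j) = 0"
        using assms(5) J(1) by (intro sum.neutral) auto
      then have "\<forall>i\<in>R. (\<Sum>j\<in>J. c' j * M i j) = 0" using h sc by auto
      then have "c' j = 0" using J(2) j unfolding lin_indep_cols_def by blast
      then show "c j = 0" using j by (simp add: c'_def)
    qed
    then have "card (J - {y}) \<le> rank2 (R - {x}) (C - {y}) M"
      using J(1) assms(1) by (intro rank2_ge) auto
    then show ?thesis using J(3) card_remove_fin[OF fJ True] by linarith
  next
    case False
    have "lin_indep_cols (R - {x}) M J"
      unfolding lin_indep_cols_def
    proof (intro allI impI)
      fix c :: "'a \<Rightarrow> complex"
      assume h: "\<forall>i\<in>R - {x}. (\<Sum>j\<in>J. c j * M i j) = 0"
      have "(\<Sum>j\<in>J. c j * M x j) = 0"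
        using assms(5) J(1) False by (intro sum.neutral) auto
      then have "\<forall>i\<in>R. (\<Sum>j\<in>J. c j * M i j) = 0" using h by auto
      then show "\<forall>j\<in>J. c j = 0" using J(2) unfolding lin_indep_cols_def by blast
    qed
    then have "card J \<le> rank2 (R - {x}) (C - {y}) M"
      using J(1) False assms(1) by (intro rank2_ge) auto
    then show ?thesis using J(3) by linarith
  qed
next
  obtain J where J: "J \<subseteq> C - {y}" "lin_indep_cols (R - {x}) M J" "card J = rank2 (R - {x}) (C - {y}) M"
    by (rule rank2_obtain[OF finite_Diff[OF assms(1)]])
  have fJ: "finite J" using J(1) assms finite_subset by blast
  have yJ: "y \<notin> J" using J(1) by blast
  have "lin_indep_cols R M (insert y J)"
    unfolding lin_indep_cols_def
  proof (intro allI impI)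
    fix c :: "'a \<Rightarrow> complex"
    assume h: "\<forall>i\<in>R. (\<Sum>j\<in>insert y J. c j * M i j) = 0"
    have z: "(\<Sum>j\<in>J. c j * M x j) = 0" using assms(5) J(1) by (intro sum.neutral) auto
    have "c y * M x y = 0" using h assms(2) z sum_insert_col[OF fJ yJ, of c "M x"] by simp
    then have cy: "c y = 0" using assms(4) by simp
    have "\<forall>i\<in>R - {x}. (\<Sum>j\<in>J. c j * M i j) = 0"
      using h cy sum_insert_col[OF fJ yJ, of c] by auto
    then have "\<forall>j\<in>J. c j = 0" using J(2) unfolding lin_indep_cols_def by blast
    then show "\<forall>j\<in>insert y J. c j = 0" using cy by blast
  qed
  then have "card (insert y J) \<le> rank2 R C M"
    using J(1) assms(1,3) by (intro rank2_ge) auto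
  then show "rank2 (R - {x}) (C - {y}) M + 1 \<le> rank2 R C M"
    using J(3) card_insert_fin[OF fJ yJ] by linarith
qed

lemma pivot_col:
  assumes "finite C" "x \<in> R" "y \<in> C" "M x y \<noteq> 0" "\<forall>i\<in>R. i \<noteq> x \<longrightarrow> M i y = 0"
  shows "rank2 R C M = rank2 (R - {x}) (C - {y}) M + 1"
proof (rule antisym)
  obtain J where J: "J \<subseteq> C" "lin_indep_cols R M J" "card J = rank2 R C M"
    by (rule rank2_obtain[OF assms(1)])
  have fJ: "finite J" using J(1) assms finite_subset by blast
  show "rank2 R C M \<le> rank2 (R - {x}) (C - {y}) M + 1"
  proof (cases "y \<in> J")
    case True
    have "lin_indep_cols (R - {x}) M (J - {y})"
      unfolding lin_indep_cols_def
    proof (intro allI impI ballI)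
      fix c :: "'a \<Rightarrow> complex" and j
      assume h: "\<forall>i\<in>R - {x}. (\<Sum>j\<in>J - {y}. c j * M i j) = 0" and j: "j \<in> J - {y}"
      define \<alpha> where "\<alpha> = (\<Sum>j\<in>J - {y}. c j * M x j)"
      define c' where "c' = c(y := - \<alpha> / M x y)"
      have sc: "(\<Sum>j\<in>J. c' j * M i j) = c' y * M i y + (\<Sum>j\<in>J - {y}. c j * M i j)" for i
      proof -
        have "(\<Sum>j\<in>J. c' j * M i j) = c' y * M i y + (\<Sum>j\<in>J - {y}. c' j * M i j)"
          using sum.remove[OF fJ True] by blast
        also have "(\<Sum>j\<in>J - {y}. c' j * M i j) = (\<Sum>j\<in>J - {y}. c j * M i j)"
          by (rule sum.cong) (auto simp: c'_def)
        finally show ?thesis .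
      qed
      have "\<forall>i\<in>R. (\<Sum>j\<in>J. c' j * M i j) = 0"
      proof
        fix i assume i: "i \<in> R"
        show "(\<Sum>j\<in>J. c' j * M i j) = 0"
        proof (cases "i = x")
          case True
          then show ?thesis using sc[of x] assms(4) by (simp add: c'_def \<alpha>_def)
        next
          case False
          then show ?thesis using sc[of i] assms(5) h i by simp
        qed
      qed
      then have "c' j = 0" using J(2) j unfolding lin_indep_cols_def by blast
      then show "c j = 0" using j by (simp add: c'_def)
    qed
    then have "card (J - {y}) \<le> rank2 (R - {x}) (C - {y}) M"
      using J(1) assms(1) by (intro rank2_ge) auto
    then show ?thesis using J(3) card_remove_fin[OF fJ True] by linarith
  next
    case False
    obtain J' where J': "J' \<subseteq> J" "lin_indep_cols (R - {x}) M J'" "card J \<le> card J' + 1"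
      using one_row[OF fJ J(2), of x] by blast
    have "card J' \<le> rank2 (R - {x}) (C - {y}) M"
      using J'(1,2) J(1) False assms(1) by (intro rank2_ge) auto
    then show ?thesis using J(3) J'(3) by linarith
  qed
next
  obtain J where J: "J \<subseteq> C - {y}" "lin_indep_cols (R - {x}) M J" "card J = rank2 (R - {x}) (C - {y}) M"
    by (rule rank2_obtain[OF finite_Diff[OF assms(1)]])
  have fJ: "finite J" using J(1) assms finite_subset by blast
  have yJ: "y \<notin> J" using J(1) by blast
  have "lin_indep_cols R M (insert y J)"
    unfolding lin_indep_cols_def
  proof (intro allI impI)
    fix c :: "'a \<Rightarrow> complex"
    assume h: "\<forall>i\<in>R. (\<Sum>j\<in>insert y J. c j * M i j) = 0"
    have "\<forall>i\<in>R - {x}. (\<Sum>j\<in>J. c j * M i j) = 0"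
    proof
      fix i assume i: "i \<in> R - {x}"
      then have "c y * M i y + (\<Sum>j\<in>J. c j * M i j) = 0"
        using h sum_insert_col[OF fJ yJ, of c "M i"] by auto
      moreover have "M i y = 0" using assms(5) i by blast
      ultimately show "(\<Sum>j\<in>J. c j * M i j) = 0" by simp
    qed
    then have cJ: "\<forall>j\<in>J. c j = 0" using J(2) unfolding lin_indep_cols_def by blast
    then have "(\<Sum>j\<in>J. c j * M x j) = 0" by simp
    then have "c y * M x y = 0" using h assms(2) sum_insert_col[OF fJ yJ, of c "M x"] by simp
    then have cy: "c y = 0" using assms(4) by simp
    then show "\<forall>j\<in>insert y J. c j = 0" using cJ by blast
  qed
  then have "card (insert y J) \<le> rank2 R C M"
    using J(1) assms(1,3) by (intro rank2_ge) auto
  then show "rank2 (R - {x}) (C - {y}) M + 1 \<le> rank2 R C M"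
    using J(3) card_insert_fin[OF fJ yJ] by linarith
qed


lemma rank2_col_change:
  assumes "finite C" "\<forall>i\<in>R. \<forall>j\<in>C - {u}. M i j = M' i j"
  shows "rank2 R C M \<le> rank2 R C M' + 1"
proof -
  have "rank2 R C M \<le> rank2 R (C - {u}) M + 1" by (rule rank2_del_col[OF assms(1)])
  also have "rank2 R (C - {u}) M = rank2 R (C - {u}) M'" by (rule rank2_cong) (use assms(2) in blast)
  also have "rank2 R (C - {u}) M' \<le> rank2 R C M'" using assms(1) by (intro rank2_mono_cols) auto
  finally show ?thesis by simp
qed

lemma rank2_del_vertex:
  assumes "finite S"
  shows "rank2 S S M \<le> rank2 (S - {x}) (S - {x}) M + 2"
    and "rank2 (S - {x}) (S - {x}) M \<le> rank2 S S M"
proof -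
  have "rank2 S S M \<le> rank2 S (S - {x}) M + 1" by (rule rank2_del_col[OF assms])
  also have "\<dots> \<le> rank2 (S - {x}) (S - {x}) M + 1 + 1"
    using rank2_del_row[of "S - {x}" S M x] assms by simp
  finally show "rank2 S S M \<le> rank2 (S - {x}) (S - {x}) M + 2" by simp
  have "rank2 (S - {x}) (S - {x}) M \<le> rank2 S (S - {x}) M"
    using assms by (intro rank2_mono_rows) auto
  also have "\<dots> \<le> rank2 S S M" using assms by (intro rank2_mono_cols) auto
  finally show "rank2 (S - {x}) (S - {x}) M \<le> rank2 S S M" .
qed

lemma rank2_mono_set:
  assumes "finite S" "T \<subseteq> S"
  shows "rank2 T T M \<le> rank2 S S M"
proof -
  have "rank2 T T M \<le> rank2 S T M" using assms finite_subset by (intro rank2_mono_rows) auto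
  also have "\<dots> \<le> rank2 S S M" using assms by (intro rank2_mono_cols) auto
  finally show ?thesis .
qed

lemma herm_extend:
  assumes fin: "finite F" "u \<in> F"
    and herm: "\<forall>i\<in>F. \<forall>j\<in>F. A i j = cnj (A j i)"
    and agree: "\<forall>i\<in>F. \<forall>j\<in>F. (i, j) \<noteq> (u, u) \<longrightarrow> A' i j = A i j"
    and eq: "rank2 F F A' = rank2 (F - {u}) (F - {u}) A + 2"
  shows "rank2 F F A = rank2 (F - {u}) (F - {u}) A + 2"
proof -
  define R where "R = F - {u}"
  have fR: "finite R" using fin by (simp add: R_def)
  have "rank2 F F A' \<le> rank2 F R A' + 1" unfolding R_def by (rule rank2_del_col[OF fin(1)])
  moreover have "rank2 F R A' = rank2 F R A"
    by (rule rank2_cong) (use agree in \<open>auto simp: R_def\<close>)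
  ultimately have ge: "rank2 F R A \<ge> rank2 R R A + 1" using eq unfolding R_def by linarith
  obtain J where J: "J \<subseteq> R" "lin_indep_cols F A J" "card J = rank2 F R A"
    by (rule rank2_obtain[OF fR])
  have fJ: "finite J" using J(1) fR finite_subset by blast
  have uJ: "u \<notin> J" using J(1) by (auto simp: R_def)
  have JF: "J \<subseteq> F" using J(1) by (auto simp: R_def)
  have "\<not> lin_indep_cols R A J"
  proof
    assume "lin_indep_cols R A J"
    then have "card J \<le> rank2 R R A" using J(1) fR by (intro rank2_ge) auto
    then show False using ge J(3) by linarith
  qed
  then obtain e j1 where e: "\<forall>i\<in>R. (\<Sum>j\<in>J. e j * A i j) = 0" "j1 \<in> J" "e j1 \<noteq> 0"
    unfolding lin_indep_cols_def by auto
  define \<beta> where "\<beta> = (\<Sum>j\<in>J. e j * A u j)"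
  have b0: "\<beta> \<noteq> 0"
  proof
    assume "\<beta> = 0"
    then have "\<forall>i\<in>F. (\<Sum>j\<in>J. e j * A i j) = 0" using e(1) by (auto simp: R_def \<beta>_def)
    then show False using J(2) e(2,3) unfolding lin_indep_cols_def by blast
  qed
  have ind: "lin_indep_cols F A (insert u J)"
    unfolding lin_indep_cols_def
  proof (intro allI impI)
    fix c :: "'a \<Rightarrow> complex"
    assume h: "\<forall>i\<in>F. (\<Sum>j\<in>insert u J. c j * A i j) = 0"
    have hs: "\<forall>i\<in>F. c u * A i u + (\<Sum>j\<in>J. c j * A i j) = 0"
      using h sum_insert_col[OF fJ uJ, of c] by auto
    have cu: "c u = 0"
    proof (rule ccontr)
      assume cu: "c u \<noteq> 0"
      have Aju: "A u j = - cnj (\<Sum>k\<in>J. c k * A j k) / cnj (c u)" if "j \<in> J" for j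
      proof -
        have "c u * A j u + (\<Sum>k\<in>J. c k * A j k) = 0" using hs that JF by blast
        then have ce: "c u * A j u = - (\<Sum>k\<in>J. c k * A j k)" by (simp add: eq_neg_iff_add_eq_0)
        have "A j u = (c u * A j u) / c u" using cu by simp
        also have "\<dots> = - (\<Sum>k\<in>J. c k * A j k) / c u" by (simp only: ce)
        finally have "A j u = - (\<Sum>k\<in>J. c k * A j k) / c u" .
        moreover have "A u j = cnj (A j u)" using herm that JF fin(2) by blast
        ultimately show ?thesis by simp
      qed
      have "\<beta> = (\<Sum>j\<in>J. e j * (- cnj (\<Sum>k\<in>J. c k * A j k) / cnj (c u)))"
        unfolding \<beta>_def by (rule sum.cong) (auto simp: Aju)
      also have "\<dots> = - (\<Sum>j\<in>J. \<Sum>k\<in>J. e j * cnj (c k) * cnj (A j k)) / cnj (c u)"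
        by (simp add: sum_distrib_left sum_divide_distrib sum_negf mult.assoc)
      also have "(\<Sum>j\<in>J. \<Sum>k\<in>J. e j * cnj (c k) * cnj (A j k))
          = (\<Sum>j\<in>J. \<Sum>k\<in>J. cnj (c k) * (e j * A k j))"
      proof (intro sum.cong refl)
        fix j k assume jk: "j \<in> J" "k \<in> J"
        then have "A k j = cnj (A j k)" using herm JF by blast
        then show "e j * cnj (c k) * cnj (A j k) = cnj (c k) * (e j * A k j)" by simp
      qed
      also have "\<dots> = (\<Sum>k\<in>J. \<Sum>j\<in>J. cnj (c k) * (e j * A k j))" by (rule sum.swap)
      also have "\<dots> = (\<Sum>k\<in>J. cnj (c k) * (\<Sum>j\<in>J. e j * A k j))"
        by (simp add: sum_distrib_left)
      also have "\<dots> = 0" using e(1) J(1) by (intro sum.neutral) auto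
      finally show False using b0 by simp
    qed
    then have "\<forall>i\<in>F. (\<Sum>j\<in>J. c j * A i j) = 0" using hs by simp
    then have "\<forall>j\<in>J. c j = 0" using J(2) unfolding lin_indep_cols_def by blast
    then show "\<forall>j\<in>insert u J. c j = 0" using cu by blast
  qed
  then have "card (insert u J) \<le> rank2 F F A"
    using JF fin by (intro rank2_ge) auto
  then have lo: "rank2 F F A \<ge> rank2 R R A + 2" using card_insert_fin[OF fJ uJ] J(3) ge by linarith
  have "rank2 F F A \<le> rank2 F R A + 1" unfolding R_def by (rule rank2_del_col[OF fin(1)])
  also have "rank2 F R A \<le> rank2 R R A + 1" unfolding R_def by (rule rank2_del_row[OF fR[unfolded R_def]])
  finally show ?thesis using lo unfolding R_def by linarith
qed


lemma pendant_rank: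
  assumes "finite S" "x \<in> S" "y \<in> S" "x \<noteq> y" "M x y \<noteq> 0" "M y x \<noteq> 0"
    "\<forall>j\<in>S. j \<noteq> y \<longrightarrow> M x j = 0" "\<forall>i\<in>S. i \<noteq> y \<longrightarrow> M i x = 0"
  shows "rank2 S S M = rank2 (S - {x, y}) (S - {x, y}) M + 2"
proof -
  have "rank2 S S M = rank2 (S - {x}) (S - {y}) M + 1"
    using assms by (intro pivot_row) auto
  also have "rank2 (S - {x}) (S - {y}) M = rank2 (S - {x} - {y}) (S - {y} - {x}) M + 1"
    using assms by (intro pivot_col) auto
  also have "S - {x} - {y} = S - {x, y}" by blast
  also have "S - {y} - {x} = S - {x, y}" by blast
  finally show ?thesis by simp
qed

lemma isolated_rank:
  assumes "finite S" "\<forall>j\<in>S. M x j = 0" "\<forall>i\<in>S. M i x = 0"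
  shows "rank2 S S M = rank2 (S - {x}) (S - {x}) M"
proof -
  have "rank2 S S M = rank2 (S - {x}) S M" using assms(2) by (rule rank2_zero_row)
  also have "\<dots> = rank2 (S - {x}) (S - {x}) M" using assms(1,3) by (intro rank2_zero_col) auto
  finally show ?thesis .
qed

definition contract_mat where
  "contract_mat M x y t z = (\<lambda>i j. M i j
     + (if i = t \<and> j = z then - (M t x * M y z / M y x) else 0)
     + (if i = z \<and> j = t then - (M z y * M x t / M x y) else 0))"

lemma contract_rank:
  assumes fin: "finite S" and mem: "x \<in> S" "y \<in> S" "t \<in> S" "z \<in> S"
    and dist: "x \<noteq> y" "t \<noteq> x" "t \<noteq> y" "z \<noteq> x" "z \<noteq> y"
    and nz: "M y x \<noteq> 0" "M x y \<noteq> 0"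
    and colx: "\<forall>i\<in>S. M i x \<noteq> 0 \<longrightarrow> i = t \<or> i = y"
    and rowy: "\<forall>j\<in>S. M y j \<noteq> 0 \<longrightarrow> j = x \<or> j = z"
    and rowx: "\<forall>j\<in>S. M x j \<noteq> 0 \<longrightarrow> j = t \<or> j = y"
    and coly: "\<forall>i\<in>S. M i y \<noteq> 0 \<longrightarrow> i = x \<or> i = z"
  shows "rank2 S S M = rank2 (S - {x, y}) (S - {x, y}) (contract_mat M x y t z) + 2"
proof -
  define M1 where "M1 = M(t := (\<lambda>j. M t j + (- M t x / M y x) * M y j))"
  have Myy: "M y y = 0" using rowy mem dist by blast
  have r1: "rank2 S S M1 = rank2 S S M" unfolding M1_def using mem dist by (intro rank2_row_op) auto
  have M1x: "\<forall>i\<in>S. i \<noteq> y \<longrightarrow> M1 i x = 0"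
  proof (intro ballI impI)
    fix i assume "i \<in> S" "i \<noteq> y"
    then show "M1 i x = 0" using colx nz(1) by (cases "i = t") (auto simp: M1_def)
  qed
  have M1yx: "M1 y x \<noteq> 0" using nz dist by (simp add: M1_def)
  have r2: "rank2 S S M1 = rank2 (S - {y}) (S - {x}) M1 + 1"
    using fin mem M1yx M1x by (intro pivot_col) auto
  define M2 where "M2 = M1(z := (\<lambda>j. M1 z j + (- M1 z y / M1 x y) * M1 x j))"
  have r3: "rank2 (S - {y}) (S - {x}) M2 = rank2 (S - {y}) (S - {x}) M1"
    unfolding M2_def using mem dist by (intro rank2_row_op) auto
  have M1xj: "M1 x j = M x j" for j using dist by (simp add: M1_def)
  have M1zy: "M1 z y = M z y" using Myy by (simp add: M1_def)
  have M1iy: "M1 i y = M i y" for i using Myy by (simp add: M1_def)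
  have M2y: "\<forall>i\<in>S - {y}. i \<noteq> x \<longrightarrow> M2 i y = 0"
  proof (intro ballI impI)
    fix i assume i: "i \<in> S - {y}" "i \<noteq> x"
    show "M2 i y = 0"
    proof (cases "i = z")
      case True
      then show ?thesis using nz(2) M1zy M1xj[of y] by (simp add: M2_def)
    next
      case False
      then have "M2 i y = M i y" by (simp add: M2_def M1iy)
      also have "\<dots> = 0" using coly i False by blast
      finally show ?thesis .
    qed
  qed
  have M2xy: "M2 x y \<noteq> 0" using nz dist M1xj by (simp add: M2_def)
  have r4: "rank2 (S - {y}) (S - {x}) M2 = rank2 (S - {y} - {x}) (S - {x} - {y}) M2 + 1"
    using fin mem dist M2xy M2y by (intro pivot_col) auto
  have e1: "S - {y} - {x} = S - {x, y}" "S - {x} - {y} = S - {x, y}" by blast+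
  have r5: "rank2 (S - {x, y}) (S - {x, y}) M2 = rank2 (S - {x, y}) (S - {x, y}) (contract_mat M x y t z)"
  proof (rule rank2_cong, intro ballI)
    fix i j assume i: "i \<in> S - {x, y}" and j: "j \<in> S - {x, y}"
    have Myj: "M y j = (if j = z then M y z else 0)" using rowy j by auto
    have Mxj: "M x j = (if j = t then M x t else 0)" using rowx j by auto
    show "M2 i j = contract_mat M x y t z i j"
    proof (cases "i = z")
      case True
      show ?thesis
      proof (cases "i = t")
        case True
        then show ?thesis using \<open>i = z\<close> M1zy M1xj Myj Mxj
          by (auto simp: M2_def M1_def contract_mat_def)
      next
        case False
        then show ?thesis using \<open>i = z\<close> M1zy M1xj Myj Mxj
          by (auto simp: M2_def M1_def contract_mat_def)
      qed
    next
      case False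
      show ?thesis
      proof (cases "i = t")
        case True
        then show ?thesis using \<open>i \<noteq> z\<close> Myj Mxj
          by (auto simp: M2_def M1_def contract_mat_def)
      next
        case False
        then show ?thesis using \<open>i \<noteq> z\<close> by (auto simp: M2_def M1_def contract_mat_def)
      qed
    qed
  qed
  show ?thesis using r1 r2 r3 r4 r5 e1 by simp
qed

definition nbrs :: "'a set \<Rightarrow> ('a \<Rightarrow> 'a \<Rightarrow> bool) \<Rightarrow> 'a \<Rightarrow> 'a set" where
  "nbrs S E x = {y \<in> S. E x y}"

definition reach :: "'a set \<Rightarrow> ('a \<Rightarrow> 'a \<Rightarrow> bool) \<Rightarrow> 'a \<Rightarrow> 'a \<Rightarrow> bool" where
  "reach S E = (induced_edges S E)\<^sup>*\<^sup>*"

definition cls :: "'a set \<Rightarrow> ('a \<Rightarrow> 'a \<Rightarrow> bool) \<Rightarrow> 'a \<Rightarrow> 'a set" where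
  "cls S E v = {u \<in> S. reach S E v u}"

definition ES :: "'a set \<Rightarrow> ('a \<Rightarrow> 'a \<Rightarrow> bool) \<Rightarrow> 'a set set" where
  "ES S E = {{x, y} | x y. induced_edges S E x y}"

lemma components_cls: "components S E = cls S E ` S"
  unfolding components_def cls_def reach_def by simp

lemma num_edges_ES: "num_edges S E = card (ES S E)"
  unfolding num_edges_def ES_def by simp

lemma degree_nbrs: "degree S E x = card (nbrs S E x)"
  unfolding degree_def nbrs_def by simp

lemma ES_sub: "ES S E \<subseteq> Pow S"
  unfolding ES_def induced_edges_def by auto

lemma ES_fin: "finite S \<Longrightarrow> finite (ES S E)"
  using ES_sub finite_Pow_iff finite_subset by metis

lemma ES_split:
  assumes sym: "\<forall>a b. E a b \<longrightarrow> E b a" and x: "x \<in> S"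
  shows "ES S E = ES (S - {x}) E \<union> (\<lambda>y. {x, y}) ` nbrs S E x"
proof (intro equalityI subsetI)
  fix e assume "e \<in> ES S E"
  then obtain a b where e: "e = {a, b}" "a \<in> S" "b \<in> S" "E a b"
    unfolding ES_def induced_edges_def by auto
  show "e \<in> ES (S - {x}) E \<union> (\<lambda>y. {x, y}) ` nbrs S E x"
  proof (cases "a = x")
    case True
    then have "e \<in> (\<lambda>y. {x, y}) ` nbrs S E x" using e by (auto simp: nbrs_def)
    then show ?thesis by (rule UnI2)
  next
    case False
    show ?thesis
    proof (cases "b = x")
      case True
      then have "e = {x, a}" "a \<in> nbrs S E x" using e sym by (auto simp: nbrs_def)
      then have "e \<in> (\<lambda>y. {x, y}) ` nbrs S E x" by blast
      then show ?thesis by (rule UnI2)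
    next
      case False
      then have "induced_edges (S - {x}) E a b" using e \<open>a \<noteq> x\<close> by (simp add: induced_edges_def)
      then have "e \<in> ES (S - {x}) E" unfolding ES_def using e(1) by blast
      then show ?thesis by (rule UnI1)
    qed
  qed
next
  fix e assume "e \<in> ES (S - {x}) E \<union> (\<lambda>y. {x, y}) ` nbrs S E x"
  then show "e \<in> ES S E"
  proof
    assume "e \<in> ES (S - {x}) E"
    then obtain a b where "e = {a, b}" "induced_edges (S - {x}) E a b" unfolding ES_def by blast
    then have "e = {a, b}" "induced_edges S E a b" by (auto simp: induced_edges_def)
    then show ?thesis unfolding ES_def by blast
  next
    assume "e \<in> (\<lambda>y. {x, y}) ` nbrs S E x"
    then obtain y where "e = {x, y}" "y \<in> S" "E x y" by (auto simp: nbrs_def)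
    then have "e = {x, y}" "induced_edges S E x y" using x by (auto simp: induced_edges_def)
    then show ?thesis unfolding ES_def by blast
  qed
qed

lemma num_edges_del:
  assumes sym: "\<forall>a b. E a b \<longrightarrow> E b a" and x: "x \<in> S" and fin: "finite S"
  shows "num_edges S E = num_edges (S - {x}) E + degree S E x"
proof -
  have disj: "ES (S - {x}) E \<inter> (\<lambda>y. {x, y}) ` nbrs S E x = {}"
    using ES_sub[of "S - {x}" E] by blast
  have inj: "inj_on (\<lambda>y. {x, y}) (nbrs S E x)"
    by (rule inj_onI) (metis doubleton_eq_iff)
  have fN: "finite (nbrs S E x)" using fin by (simp add: nbrs_def)
  have "card (ES S E) = card (ES (S - {x}) E) + card ((\<lambda>y. {x, y}) ` nbrs S E x)"
    unfolding ES_split[OF sym x]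
    by (rule card_Un_disjoint) (use ES_fin fin fN disj in auto)
  also have "card ((\<lambda>y. {x, y}) ` nbrs S E x) = card (nbrs S E x)" using card_image[OF inj] .
  finally show ?thesis by (simp add: num_edges_ES degree_nbrs)
qed

lemma reach_mono:
  assumes "T \<subseteq> S" "reach T E a b"
  shows "reach S E a b"
  using assms(2) unfolding reach_def
proof (induction rule: rtranclp_induct)
  case base then show ?case by simp
next
  case (step y z)
  then have "induced_edges S E y z" using assms(1) by (auto simp: induced_edges_def)
  then show ?case by (rule rtranclp.rtrancl_into_rtrancl[OF step(3)])
qed

lemma reach_sym:
  assumes sym: "\<forall>a b. E a b \<longrightarrow> E b a" and r: "reach S E a b"
  shows "reach S E b a"
  using r unfolding reach_def
proof (induction rule: rtranclp_induct)
  case base then show ?case by simp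
next
  case (step y z)
  then have "induced_edges S E z y" using sym by (auto simp: induced_edges_def)
  then show ?case using step(3) by (rule converse_rtranclp_into_rtranclp)
qed

lemma reach_trans: "reach S E a b \<Longrightarrow> reach S E b c \<Longrightarrow> reach S E a c"
  unfolding reach_def by simp

lemma reach_edge: "a \<in> S \<Longrightarrow> b \<in> S \<Longrightarrow> E a b \<Longrightarrow> reach S E a b"
  unfolding reach_def by (rule r_into_rtranclp) (simp add: induced_edges_def)

lemma reach_in: "reach S E a b \<Longrightarrow> a \<noteq> b \<Longrightarrow> b \<in> S"
  unfolding reach_def by (induction rule: rtranclp_induct) (auto simp: induced_edges_def)

lemma cls_eq:
  assumes sym: "\<forall>a b. E a b \<longrightarrow> E b a" and ab: "reach S E a b"
  shows "cls S E a = cls S E b"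
proof -
  have ba: "reach S E b a" by (rule reach_sym[OF sym ab])
  have "reach S E a u \<longleftrightarrow> reach S E b u" for u
    using reach_trans[OF ab, of u] reach_trans[OF ba, of u] by auto
  then show ?thesis unfolding cls_def by simp
qed

lemma cls_self: "a \<in> S \<Longrightarrow> a \<in> cls S E a"
  unfolding cls_def reach_def by simp

lemma cls_sub: "cls S E a \<subseteq> S"
  unfolding cls_def by auto

lemma reach_avoid:
  assumes sym: "\<forall>a b. E a b \<longrightarrow> E b a"
    and r: "reach S E w u" and w: "w \<in> S - {x}"
    and no: "\<forall>y\<in>nbrs S E x. \<not> reach (S - {x}) E w y"
  shows "reach (S - {x}) E w u \<and> u \<noteq> x"
  using r unfolding reach_def
proof (induction rule: rtranclp_induct)
  case base then show ?case using w by simp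
next
  case (step y z)
  then have ry: "reach (S - {x}) E w y" "y \<noteq> x" by (auto simp: reach_def)
  have yz: "y \<in> S" "z \<in> S" "E y z" using step(2) by (auto simp: induced_edges_def)
  have "z \<noteq> x"
  proof
    assume "z = x"
    then have "y \<in> nbrs S E x" using yz sym by (auto simp: nbrs_def)
    then show False using no ry(1) by blast
  qed
  then have "induced_edges (S - {x}) E y z" using yz ry(2) by (simp add: induced_edges_def)
  then have "(induced_edges (S - {x}) E)\<^sup>*\<^sup>* w z"
    using ry(1) unfolding reach_def by (simp add: rtranclp.rtrancl_into_rtrancl)
  then show ?case using \<open>z \<noteq> x\<close> by (simp add: reach_def)
qed

lemma comp_obtain:
  assumes "K \<in> components S E"
  obtains w where "w \<in> S" "K = cls S E w"
proof -
  have "\<exists>w\<in>S. K = cls S E w" using assms unfolding components_cls by (simp add: image_iff)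
  then show ?thesis using that by auto
qed

lemma comps_fin: "finite S \<Longrightarrow> finite (components S E)"
  by (simp add: components_cls)

lemma comps_upper:
  assumes sym: "\<forall>a b. E a b \<longrightarrow> E b a" and x: "x \<in> S" and fin: "finite S"
  shows "num_components (S - {x}) E + 1 \<le> num_components S E + card (cls (S - {x}) E ` nbrs S E x)"
proof -
  let ?N = "nbrs S E x"
  have sub: "components (S - {x}) E \<subseteq> (components S E - {cls S E x}) \<union> cls (S - {x}) E ` ?N"
  proof
    fix K assume "K \<in> components (S - {x}) E"
    then obtain w where w: "w \<in> S - {x}" "K = cls (S - {x}) E w" by (rule comp_obtain)
    show "K \<in> (components S E - {cls S E x}) \<union> cls (S - {x}) E ` ?N"
    proof (cases "\<exists>y\<in>?N. reach (S - {x}) E w y")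
      case True
      then obtain y where y: "y \<in> ?N" "reach (S - {x}) E w y" by blast
      then have "K = cls (S - {x}) E y" using w cls_eq[OF sym] by metis
      then show ?thesis using y(1) by blast
    next
      case False
      then have no: "\<forall>y\<in>?N. \<not> reach (S - {x}) E w y" by blast
      have "K = cls S E w"
      proof (intro equalityI subsetI)
        fix u assume "u \<in> K"
        then have "u \<in> S" "reach (S - {x}) E w u" using w(2) by (auto simp: cls_def)
        then show "u \<in> cls S E w" using reach_mono[of "S - {x}" S] by (auto simp: cls_def)
      next
        fix u assume "u \<in> cls S E w"
        then have "u \<in> S" "reach S E w u" by (auto simp: cls_def)
        then show "u \<in> K" using reach_avoid[OF sym _ w(1) no] w(2) by (auto simp: cls_def)
      qed
      moreover have "K \<noteq> cls S E x"
      proof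
        assume "K = cls S E x"
        then have "x \<in> K" using cls_self[OF x] by simp
        then show False using w(2) cls_sub[of "S - {x}" E w] by blast
      qed
      moreover have "cls S E w \<in> components S E" using w(1) by (auto simp: components_cls)
      ultimately show ?thesis by blast
    qed
  qed
  have f1: "finite (components S E - {cls S E x})" using comps_fin[OF fin] by simp
  have f2: "finite (cls (S - {x}) E ` ?N)" using fin by (simp add: nbrs_def)
  have "card (components (S - {x}) E) \<le> card ((components S E - {cls S E x}) \<union> cls (S - {x}) E ` ?N)"
    by (rule card_mono) (use f1 f2 sub in auto)
  also have "\<dots> \<le> card (components S E - {cls S E x}) + card (cls (S - {x}) E ` ?N)"
    by (rule card_Un_le)
  also have "card (components S E - {cls S E x}) = card (components S E) - 1"
    using x by (simp add: components_cls)
  finally have le: "card (components (S - {x}) E) \<le> card (components S E) - 1 + card (cls (S - {x}) E ` ?N)" .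
  have "cls S E x \<in> components S E" using x by (simp add: components_cls)
  then have "card (components S E) > 0" using comps_fin[OF fin] card_gt_0_iff by blast
  then show ?thesis using le unfolding num_components_def by linarith
qed


lemma reach_avoid2:
  assumes r: "reach S E w u" and w: "w \<noteq> x"
    and no: "\<forall>v. reach S E w v \<longrightarrow> v \<noteq> x"
  shows "reach (S - {x}) E w u"
  using r unfolding reach_def
proof (induction rule: rtranclp_induct)
  case base then show ?case by simp
next
  case (step y z)
  have "y \<noteq> x" using no step(1) unfolding reach_def by blast
  moreover have "(induced_edges S E)\<^sup>*\<^sup>* w z" by (rule rtranclp.rtrancl_into_rtrancl[OF step(1) step(2)])
  then have "z \<noteq> x" using no unfolding reach_def by blast
  ultimately have "y \<noteq> x" "z \<noteq> x" by simp_all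
  then have "induced_edges (S - {x}) E y z" using step(2) by (simp add: induced_edges_def)
  then show ?case using step(3) by (simp add: rtranclp.rtrancl_into_rtrancl)
qed

lemma comps_lower:
  assumes sym: "\<forall>a b. E a b \<longrightarrow> E b a" and irr: "\<forall>a. \<not> E a a"
    and x: "x \<in> S" and fin: "finite S" and y0: "y0 \<in> nbrs S E x"
  shows "num_components S E \<le> num_components (S - {x}) E"
proof -
  have y0S: "y0 \<in> S - {x}" using y0 irr by (auto simp: nbrs_def)
  have rx: "reach S E y0 x" using y0 x sym by (intro reach_edge) (auto simp: nbrs_def)
  define f where "f = (\<lambda>K. if x \<in> K then cls (S - {x}) E y0 else K)"
  have cx: "K = cls S E x" if hK: "K \<in> components S E" "x \<in> K" for K
  proof -
    obtain w where w: "w \<in> S" "K = cls S E w" by (rule comp_obtain[OF hK(1)])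
    then have "reach S E w x" using that(2) by (auto simp: cls_def)
    then show ?thesis using w cls_eq[OF sym] by simp
  qed
  have ncx: "K = cls (S - {x}) E w \<and> w \<in> S - {x}" if "w \<in> S" "K = cls S E w" "x \<notin> K" for K w
  proof
    have wx: "w \<noteq> x" using that cls_self[OF that(1), of E] by auto
    then show "w \<in> S - {x}" using that(1) by simp
    have no: "\<forall>v. reach S E w v \<longrightarrow> v \<noteq> x" using that x by (auto simp: cls_def)
    show "K = cls (S - {x}) E w"
    proof (intro equalityI subsetI)
      fix u assume "u \<in> K"
      then have "u \<in> S" "reach S E w u" using that(2) by (auto simp: cls_def)
      moreover have "u \<noteq> x" using \<open>u \<in> K\<close> that(3) by blast
      ultimately show "u \<in> cls (S - {x}) E w" using reach_avoid2[OF _ wx no] by (auto simp: cls_def)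
    next
      fix u assume "u \<in> cls (S - {x}) E w"
      then show "u \<in> K" using that(2) reach_mono[of "S - {x}" S] by (auto simp: cls_def)
    qed
  qed
  have maps: "f ` components S E \<subseteq> components (S - {x}) E"
  proof
    fix L assume "L \<in> f ` components S E"
    then obtain K where K: "K \<in> components S E" "L = f K" by blast
    obtain w where w: "w \<in> S" "K = cls S E w" by (rule comp_obtain[OF K(1)])
    show "L \<in> components (S - {x}) E"
    proof (cases "x \<in> K")
      case True
      then show ?thesis using K(2) y0S by (simp add: f_def components_cls)
    next
      case False
      then show ?thesis using K(2) ncx[OF w False] by (simp add: f_def components_cls)
    qed
  qed
  have inj: "inj_on f (components S E)"
  proof (rule inj_onI)
    fix K1 K2 assume K: "K1 \<in> components S E" "K2 \<in> components S E" "f K1 = f K2"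
    have cross: False if hK: "x \<in> Ka" "x \<notin> Kb" "Kb \<in> components S E" "f Ka = f Kb" for Ka Kb
    proof -
      obtain w where w: "w \<in> S" "Kb = cls S E w" by (rule comp_obtain[OF hK(3)])
      have "f Kb = Kb" using that(2) by (simp add: f_def)
      then have "cls (S - {x}) E y0 = Kb" using that(1,4) by (simp add: f_def)
      then have "y0 \<in> Kb" using cls_self[OF y0S, of E] by simp
      then have "reach S E w y0" using w by (auto simp: cls_def)
      then have "reach S E w x" using reach_trans[OF _ rx] by blast
      then have "x \<in> Kb" using w x by (auto simp: cls_def)
      then show False using that(2) by simp
    qed
    show "K1 = K2"
    proof (cases "x \<in> K1")
      case True
      show ?thesis
      proof (cases "x \<in> K2")
        case True
        then show ?thesis using cx[OF K(1) \<open>x \<in> K1\<close>] cx[OF K(2) True] by simp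
      next
        case False
        then show ?thesis using cross[OF \<open>x \<in> K1\<close> False K(2,3)] by simp
      qed
    next
      case False
      show ?thesis
      proof (cases "x \<in> K2")
        case True
        then show ?thesis using cross[OF True False K(1) K(3)[symmetric]] by simp
      next
        case False
        then show ?thesis using K(3) \<open>x \<notin> K1\<close> by (simp add: f_def)
      qed
    qed
  qed
  show ?thesis unfolding num_components_def
    using card_inj_on_le[OF inj maps comps_fin[of "S - {x}" E]] fin by simp
qed

lemma theta_del:
  assumes sym: "\<forall>a b. E a b \<longrightarrow> E b a" and x: "x \<in> S" and fin: "finite S"
  shows "theta (S - {x}) E \<le> theta S E - int (degree S E x) + int (card (cls (S - {x}) E ` nbrs S E x))"
proof -
  have e: "num_edges S E = num_edges (S - {x}) E + degree S E x" by (rule num_edges_del[OF sym x fin])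
  have c: "card S = card (S - {x}) + 1" using card_Suc_Diff1[OF fin x] by simp
  have w: "num_components (S - {x}) E + 1 \<le> num_components S E + card (cls (S - {x}) E ` nbrs S E x)"
    by (rule comps_upper[OF sym x fin])
  show ?thesis unfolding theta_def using e c w by linarith
qed

lemma theta_mono1:
  assumes sym: "\<forall>a b. E a b \<longrightarrow> E b a" and fin: "finite S"
  shows "theta (S - {x}) E \<le> theta S E"
proof (cases "x \<in> S")
  case True
  have "card (cls (S - {x}) E ` nbrs S E x) \<le> card (nbrs S E x)"
    by (rule card_image_le) (use fin in \<open>simp add: nbrs_def\<close>)
  then show ?thesis using theta_del[OF sym True fin] by (simp add: degree_nbrs)
next
  case False
  then show ?thesis by simp
qed

lemma theta_strict:
  assumes sym: "\<forall>a b. E a b \<longrightarrow> E b a" and x: "x \<in> S" and fin: "finite S"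
    and ab: "a \<in> nbrs S E x" "b \<in> nbrs S E x" "a \<noteq> b" "reach (S - {x}) E a b"
  shows "theta (S - {x}) E \<le> theta S E - 1"
proof -
  have fN: "finite (nbrs S E x)" using fin by (simp add: nbrs_def)
  have "cls (S - {x}) E a = cls (S - {x}) E b" by (rule cls_eq[OF sym ab(4)])
  then have "\<not> inj_on (cls (S - {x}) E) (nbrs S E x)"
  proof (intro notI)
    assume "inj_on (cls (S - {x}) E) (nbrs S E x)" "cls (S - {x}) E a = cls (S - {x}) E b"
    then have "a = b" using ab(1,2) by (rule inj_onD)
    then show False using ab(3) by simp
  qed
  then have "card (cls (S - {x}) E ` nbrs S E x) \<noteq> card (nbrs S E x)"
    using inj_on_iff_eq_card[OF fN] by blast
  moreover have "card (cls (S - {x}) E ` nbrs S E x) \<le> card (nbrs S E x)"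
    by (rule card_image_le[OF fN])
  ultimately show ?thesis using theta_del[OF sym x fin] by (simp add: degree_nbrs)
qed

lemma theta_pendant_lower:
  assumes sym: "\<forall>a b. E a b \<longrightarrow> E b a" and irr: "\<forall>a. \<not> E a a"
    and x: "x \<in> S" and fin: "finite S" and d: "nbrs S E x = {y}"
  shows "theta S E \<le> theta (S - {x}) E"
proof -
  have e: "num_edges S E = num_edges (S - {x}) E + 1"
    using num_edges_del[OF sym x fin] d by (simp add: degree_nbrs)
  have c: "card S = card (S - {x}) + 1" using card_Suc_Diff1[OF fin x] by simp
  have "num_components S E \<le> num_components (S - {x}) E"
    by (rule comps_lower[OF sym irr x fin, of y]) (use d in simp)
  then show ?thesis unfolding theta_def using e c by linarith
qed

lemma theta_subset:
  assumes sym: "\<forall>a b. E a b \<longrightarrow> E b a" and fin: "finite S" and T: "T \<subseteq> S"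
  shows "theta T E \<le> theta S E"
proof -
  have "finite D \<Longrightarrow> theta (S - D) E \<le> theta S E" for D
  proof (induction D rule: finite_induct)
    case empty then show ?case by simp
  next
    case (insert d D)
    have "S - insert d D = (S - D) - {d}" by blast
    then have "theta (S - insert d D) E \<le> theta (S - D) E"
      using theta_mono1[OF sym, of "S - D" d] fin by simp
    then show ?case using insert(3) by simp
  qed
  moreover have "S - (S - T) = T" using T by blast
  ultimately show ?thesis using finite_Diff[OF fin, of T] by metis
qed

fun is_path :: "('a \<Rightarrow> 'a \<Rightarrow> bool) \<Rightarrow> 'a list \<Rightarrow> bool" where
  "is_path E [] = True"
| "is_path E [a] = True"
| "is_path E (a # b # t) = (E a b \<and> is_path E (b # t))"

lemma path_reach_hd:
  "is_path E xs \<Longrightarrow> set xs \<subseteq> T \<Longrightarrow> u \<in> set xs \<Longrightarrow> reach T E (hd xs) u"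
proof (induction E xs rule: is_path.induct)
  case (1 E) then show ?case by simp
next
  case (2 E a) then show ?case by (simp add: reach_def)
next
  case (3 E a b t)
  show ?case
  proof (cases "u = a")
    case True then show ?thesis by (simp add: reach_def)
  next
    case False
    then have "u \<in> set (b # t)" using 3(4) by simp
    then have r: "reach T E b u" using 3 by simp
    have "reach T E a b" using 3(2,3) by (intro reach_edge) auto
    then show ?thesis using reach_trans[OF _ r] by simp
  qed
qed

lemma path_tl: "is_path E (a # ys) \<Longrightarrow> is_path E ys"
  by (cases ys) auto

lemma exists_cycle_vertex:
  assumes sym: "\<forall>a b. E a b \<longrightarrow> E b a" and irr: "\<forall>a. \<not> E a a"
    and fin: "finite S" and ne: "s \<in> S"
    and deg2: "\<forall>a\<in>S. \<exists>b c. b \<noteq> c \<and> b \<in> nbrs S E a \<and> c \<in> nbrs S E a"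
  shows "\<exists>x\<in>S. \<exists>a b. a \<in> nbrs S E x \<and> b \<in> nbrs S E x \<and> a \<noteq> b \<and> reach (S - {x}) E a b"
proof -
  define P where "P = {xs. xs \<noteq> [] \<and> distinct xs \<and> set xs \<subseteq> S \<and> is_path E xs}"
  have fP: "finite P"
    by (rule finite_subset[OF _ finite_subset_distinct[OF fin]]) (auto simp: P_def)
  have sP: "[s] \<in> P" using ne by (simp add: P_def)
  define m where "m = Max (length ` P)"
  have "m \<in> length ` P" unfolding m_def using fP sP by (intro Max_in) auto
  then obtain xs where xs: "xs \<in> P" "length xs = m" by auto
  have maxi: "length zs \<le> m" if "zs \<in> P" for zs
    unfolding m_def using fP that by (intro Max_ge) auto
  obtain w ys where wys: "xs = w # ys" using xs(1) by (cases xs) (auto simp: P_def)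
  have wS: "w \<in> S" and dist: "distinct (w # ys)" and ysS: "set ys \<subseteq> S" and pth: "is_path E (w # ys)"
    using xs(1) wys by (auto simp: P_def)
  have inys: "n \<in> set ys" if "n \<in> nbrs S E w" for n
  proof (rule ccontr)
    assume nys: "n \<notin> set ys"
    have "n \<noteq> w" using that irr by (auto simp: nbrs_def)
    then have "n \<notin> set xs" using nys wys by simp
    moreover have "n \<in> S" "E n w" using that sym by (auto simp: nbrs_def)
    ultimately have "n # xs \<in> P" using xs(1) wys by (auto simp: P_def)
    then have "length (n # xs) \<le> m" by (rule maxi)
    then show False using xs(2) by simp
  qed
  obtain b c where bc: "b \<noteq> c" "b \<in> nbrs S E w" "c \<in> nbrs S E w" using deg2 wS by blast
  have bys: "b \<in> set ys" and cys: "c \<in> set ys" using inys bc by auto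
  have pys: "is_path E ys" using pth by (rule path_tl)
  have rb: "reach (set ys) E (hd ys) b" and rc: "reach (set ys) E (hd ys) c"
    using path_reach_hd[OF pys order_refl] bys cys by auto
  have "reach (set ys) E b c" using reach_trans[OF reach_sym[OF sym rb] rc] .
  moreover have "set ys \<subseteq> S - {w}" using ysS dist by auto
  ultimately have "reach (S - {w}) E b c" by (rule reach_mono[rotated])
  then show ?thesis using wS bc by blast
qed


lemma theta_empty: "theta {} E = 0"
  by (simp add: theta_def num_edges_ES ES_def induced_edges_def num_components_def components_cls)

lemma lower_bound:
  assumes sym: "\<forall>a b. E a b \<longrightarrow> E b a" and irr: "\<forall>a. \<not> E a a"
    and fin: "finite S"
    and pA: "\<forall>i\<in>S. \<forall>j\<in>S. MA i j \<noteq> 0 \<longleftrightarrow> E i j"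
    and pB: "\<forall>i\<in>S. \<forall>j\<in>S. MB i j \<noteq> 0 \<longleftrightarrow> E i j"
  shows "int (rank2 S S MA) \<le> int (rank2 S S MB) + 2 * theta S E"
  using fin pA pB
proof (induction "card S" arbitrary: S rule: less_induct)
  case less
  note fin = less.prems(1) and pA = less.prems(2) and pB = less.prems(3)
  have IH: "int (rank2 T T MA) \<le> int (rank2 T T MB) + 2 * theta T E" if "T \<subseteq> S" "T \<noteq> S" for T
  proof -
    have fT: "finite T" using that fin finite_subset by blast
    have "card T < card S" using that fin by (simp add: psubset_card_mono)
    then show ?thesis using less.hyps fT pA pB that(1) by blast
  qed
  show ?case
  proof (cases "S = {}")
    case True
    then show ?thesis using rank2_le_card[of "{}" "{}" MA] by (simp add: theta_empty)
  next
    case False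
    then obtain s where s: "s \<in> S" by blast
    show ?thesis
    proof (cases "\<exists>x\<in>S. nbrs S E x = {}")
      case True
      then obtain x where x: "x \<in> S" "nbrs S E x = {}" by blast
      have nx: "\<not> E x j" "\<not> E j x" if "j \<in> S" for j
        using x that sym by (auto simp: nbrs_def)
      have rA: "rank2 S S MA = rank2 (S - {x}) (S - {x}) MA"
        using nx pA x(1) by (intro isolated_rank[OF fin]) auto
      have rB: "rank2 S S MB = rank2 (S - {x}) (S - {x}) MB"
        using nx pB x(1) by (intro isolated_rank[OF fin]) auto
      have "theta (S - {x}) E \<le> theta S E" by (rule theta_mono1[OF sym fin])
      moreover have "int (rank2 (S - {x}) (S - {x}) MA) \<le> int (rank2 (S - {x}) (S - {x}) MB) + 2 * theta (S - {x}) E"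
        using x(1) by (intro IH) auto
      ultimately show ?thesis using rA rB by linarith
    next
      case False
      show ?thesis
      proof (cases "\<exists>x\<in>S. \<exists>y. nbrs S E x = {y}")
        case True
        then obtain x y where x: "x \<in> S" "nbrs S E x = {y}" by blast
        have y: "y \<in> S" "E x y" "E y x" using x sym by (auto simp: nbrs_def)
        have xy: "x \<noteq> y" using y irr by auto
        have onlyy: "\<not> E x j" if "j \<in> S" "j \<noteq> y" for j
          using x that by (auto simp: nbrs_def)
        have onlyy2: "\<not> E j x" if "j \<in> S" "j \<noteq> y" for j
          using onlyy[OF that] sym by blast
        have rA: "rank2 S S MA = rank2 (S - {x, y}) (S - {x, y}) MA + 2"
          using pA x(1) y xy onlyy onlyy2 by (intro pendant_rank[OF fin]) auto
        have rB: "rank2 S S MB = rank2 (S - {x, y}) (S - {x, y}) MB + 2"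
          using pB x(1) y xy onlyy onlyy2 by (intro pendant_rank[OF fin]) auto
        have "theta (S - {x} - {y}) E \<le> theta (S - {x}) E" using fin by (intro theta_mono1[OF sym]) auto
        also have "\<dots> \<le> theta S E" by (rule theta_mono1[OF sym fin])
        finally have th: "theta (S - {x, y}) E \<le> theta S E" by (simp add: Diff_insert2[symmetric] insert_commute)
        have "int (rank2 (S - {x, y}) (S - {x, y}) MA) \<le> int (rank2 (S - {x, y}) (S - {x, y}) MB) + 2 * theta (S - {x, y}) E"
          using x(1) by (intro IH) auto
        then show ?thesis using rA rB th by linarith
      next
        case False2: False
        have deg2: "\<forall>a\<in>S. \<exists>b c. b \<noteq> c \<and> b \<in> nbrs S E a \<and> c \<in> nbrs S E a"
        proof
          fix a assume a: "a \<in> S"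
          have n1: "nbrs S E a \<noteq> {}" using False a by blast
          then obtain b where b: "b \<in> nbrs S E a" by blast
          have "nbrs S E a \<noteq> {b}" using False2 a by blast
          then obtain c where "c \<in> nbrs S E a" "c \<noteq> b" using b by blast
          then show "\<exists>b c. b \<noteq> c \<and> b \<in> nbrs S E a \<and> c \<in> nbrs S E a" using b by blast
        qed
        obtain x a b where x: "x \<in> S" "a \<in> nbrs S E x" "b \<in> nbrs S E x" "a \<noteq> b" "reach (S - {x}) E a b"
          using exists_cycle_vertex[OF sym irr fin s deg2] by blast
        have th: "theta (S - {x}) E \<le> theta S E - 1" by (rule theta_strict[OF sym x(1) fin x(2-5)])
        have rA: "rank2 S S MA \<le> rank2 (S - {x}) (S - {x}) MA + 2" by (rule rank2_del_vertex(1)[OF fin])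
        have rB: "rank2 (S - {x}) (S - {x}) MB \<le> rank2 S S MB" by (rule rank2_del_vertex(2)[OF fin])
        have "int (rank2 (S - {x}) (S - {x}) MA) \<le> int (rank2 (S - {x}) (S - {x}) MB) + 2 * theta (S - {x}) E"
          using x(1) by (intro IH) auto
        then show ?thesis using rA rB th by linarith
      qed
    qed
  qed
qed

locale pcyc =
  fixes V :: "'a set" and E :: "'a \<Rightarrow> 'a \<Rightarrow> bool" and \<psi> :: "'a \<Rightarrow> 'a \<Rightarrow> complex"
    and w :: "nat \<Rightarrow> 'a" and p :: nat and v :: 'a and u :: 'a
  assumes sg: "simple_graph V E" and ug: "unit_gain E \<psi>"
    and p3: "p \<ge> 3" and w0: "w 0 = v"
    and winj: "inj_on w {..<p}" and wV: "\<And>i. i < p \<Longrightarrow> w i \<in> V"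
    and uV: "u \<in> V" and ucyc: "u \<notin> w ` {..<p}"
    and nbw: "\<And>i j. 0 < i \<Longrightarrow> i < p \<Longrightarrow> j \<in> V \<Longrightarrow> E (w i) j \<longleftrightarrow> j = w (i - 1) \<or> j = w (Suc i mod p)"
    and nbv: "\<And>j. j \<in> V \<Longrightarrow> E v j \<longleftrightarrow> j = w 1 \<or> j = w (p - 1) \<or> j = u"
begin

definition "M = gain_adj_mat E \<psi>"
definition "g i = \<psi> (w i) (w (Suc i mod p))"

lemma fin: "finite V" using sg by (simp add: simple_graph_def)
lemma sym: "\<forall>a b. E a b \<longrightarrow> E b a" using sg by (simp add: simple_graph_def)
lemma irr: "\<forall>a. \<not> E a a" using sg by (simp add: simple_graph_def)
lemma inV: "E a b \<Longrightarrow> a \<in> V \<and> b \<in> V" using sg by (simp add: simple_graph_def)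

lemma weq: "i < p \<Longrightarrow> j < p \<Longrightarrow> w i = w j \<longleftrightarrow> i = j"
  using winj by (auto dest: inj_onD)

lemma vV: "v \<in> V" using wV[of 0] p3 w0 by simp

lemma M_nz: "M a b \<noteq> 0 \<longleftrightarrow> E a b"
proof -
  have "E a b \<Longrightarrow> \<psi> a b \<noteq> 0" using ug unfolding unit_gain_def by fastforce
  then show ?thesis by (auto simp: M_def gain_adj_mat_def)
qed

lemma M_herm: "M b a = cnj (M a b)"
  using ug sym unfolding M_def gain_adj_mat_def unit_gain_def
  by (metis complex_cnj_cnj complex_cnj_zero)

lemma E_next: "i < p \<Longrightarrow> E (w i) (w (Suc i mod p))"
proof (cases "i = 0")
  case True
  then show ?thesis using nbv[of "w 1"] wV[of 1] p3 w0 by simp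
next
  case False
  assume "i < p"
  then show ?thesis using nbw[of i "w (Suc i mod p)"] wV[of "Suc i mod p"] p3 False by simp
qed

lemma g_unit: "i < p \<Longrightarrow> cmod (g i) = 1"
  using E_next ug unfolding unit_gain_def g_def by blast

lemma g_nz: "i < p \<Longrightarrow> g i \<noteq> 0"
  using g_unit by fastforce

lemma g_inv: "i < p \<Longrightarrow> g i * cnj (g i) = 1"
  using g_unit complex_norm_square[of "g i"] by (simp add: power2_eq_square)

lemma M_next: "i < p \<Longrightarrow> M (w i) (w (Suc i mod p)) = g i"
  using E_next by (simp add: M_def gain_adj_mat_def g_def)

lemma M_prev: "i < p \<Longrightarrow> M (w (Suc i mod p)) (w i) = cnj (g i)"
  using M_next M_herm by metis

lemma Mw_nz: "0 < i \<Longrightarrow> i < p \<Longrightarrow> j \<in> V \<Longrightarrow> M (w i) j \<noteq> 0 \<Longrightarrow> j = w (i - 1) \<or> j = w (Suc i mod p)"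
  using M_nz nbw by blast

lemma Mw_nz': "0 < i \<Longrightarrow> i < p \<Longrightarrow> j \<in> V \<Longrightarrow> M j (w i) \<noteq> 0 \<Longrightarrow> j = w (i - 1) \<or> j = w (Suc i mod p)"
  using M_nz nbw sym by blast

lemma Mv_nz: "j \<in> V \<Longrightarrow> M v j \<noteq> 0 \<Longrightarrow> j = w 1 \<or> j = w (p - 1) \<or> j = u"
  using M_nz nbv by blast

lemma Mv_nz': "j \<in> V \<Longrightarrow> M j v \<noteq> 0 \<Longrightarrow> j = w 1 \<or> j = w (p - 1) \<or> j = u"
  using M_nz nbv sym by blast

definition "Sk k = V - w ` {1..2*k}"
definition "gam k = (-1) ^ k * (\<Prod>i\<in>{..2*k}. g i)"
definition "Mk k = (\<lambda>i j. if i = v \<and> j = w (2*k+1) then gam k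
    else if i = w (2*k+1) \<and> j = v then cnj (gam k) else M i j)"
definition "Nk k = (\<lambda>i j. M i j + (if i = v \<and> j = w ((2*k+3) mod p) then gam (Suc k) else 0)
    + (if i = w ((2*k+3) mod p) \<and> j = v then cnj (gam (Suc k)) else 0))"

lemma w_img: "j < p \<Longrightarrow> A \<subseteq> {..<p} \<Longrightarrow> w j \<in> w ` A \<longleftrightarrow> j \<in> A"
proof
  assume "j < p" "A \<subseteq> {..<p}" "w j \<in> w ` A"
  then obtain i where "i \<in> A" "w j = w i" by auto
  then show "j \<in> A" using \<open>j < p\<close> \<open>A \<subseteq> {..<p}\<close> weq by auto
qed auto

lemma w_in_Sk: "j < p \<Longrightarrow> 2*k < p \<Longrightarrow> w j \<in> Sk k \<longleftrightarrow> j = 0 \<or> 2*k < j"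
proof -
  assume j: "j < p" and k: "2*k < p"
  have sub: "{1..2*k} \<subseteq> {..<p}" using k by auto
  show ?thesis unfolding Sk_def using w_img[OF j sub] wV[OF j] by auto
qed

lemma v_in_Sk: "2*k < p \<Longrightarrow> v \<in> Sk k"
  using w_in_Sk[of 0 k] p3 w0 by simp

lemma Sk_sub: "Sk k \<subseteq> V" unfolding Sk_def by auto

lemma Sk_Suc: "2*k+2 < p \<Longrightarrow> Sk (Suc k) = Sk k - {w (2*k+1), w (2*k+2)}"
proof -
  have "{1..2 * Suc k} = {1..2*k} \<union> {2*k+1, 2*k+2}" by auto
  then show ?thesis unfolding Sk_def by auto
qed

lemma unit_div: assumes "cmod a = 1" shows "b / cnj a = b * a"
proof -
  have aa: "a * cnj a = 1" using complex_norm_square[of a] assms by simp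
  have "cnj a \<noteq> 0" using assms by auto
  then show ?thesis using aa by (simp add: field_simps)
qed

lemma unit_div2: "cmod a = 1 \<Longrightarrow> b / a = b * cnj a"
  using unit_div[of "cnj a" b] by simp

lemma gam_Suc: "gam (Suc k) = - gam k * g (2*k+1) * g (2*k+2)"
proof -
  have "{..2 * Suc k} = insert (2*k+2) (insert (2*k+1) {..2*k})" by auto
  then have "(\<Prod>i\<in>{..2 * Suc k}. g i) = g (2*k+2) * (g (2*k+1) * (\<Prod>i\<in>{..2*k}. g i))" by simp
  then show ?thesis unfolding gam_def by (simp add: algebra_simps)
qed

lemma Mk0: "Mk 0 = M"
proof (intro ext)
  fix i j
  have "M v (w 1) = g 0" using M_next[of 0] p3 w0 by simp
  moreover have "M (w 1) v = cnj (g 0)" using M_prev[of 0] p3 w0 by simp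
  ultimately show "Mk 0 i j = M i j" by (auto simp: Mk_def gam_def)
qed

lemma step:
  assumes k: "2*k+2 < p"
  shows "rank2 (Sk k) (Sk k) (Mk k) = rank2 (Sk (Suc k)) (Sk (Suc k)) (Nk k) + 2"
proof -
  define a where "a = 2*k+1"
  define x where "x = w a"
  define y where "y = w (Suc a)"
  define c where "c = Suc (Suc a) mod p"
  define z where "z = w c"
  have ap: "a < p" "Suc a < p" "0 < a" using k by (auto simp: a_def)
  have Sucmod: "Suc a mod p = Suc a" using ap by simp
  have cp: "c < p" using p3 by (simp add: c_def)
  have c_val: "c = (if 2*k+3 < p then 2*k+3 else 0)"
  proof (cases "2*k+3 < p")
    case True then show ?thesis by (simp add: c_def a_def)
  next
    case False
    then have "Suc (Suc a) = p" using k by (simp add: a_def)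
    then show ?thesis using False by (simp add: c_def)
  qed
  have c_cases: "c = 0 \<or> 2*k < c" using c_val by auto
  have ca: "c \<noteq> a" "c \<noteq> Suc a" using c_val by (auto simp: a_def)
  have k2: "2*k < p" using k by simp
  have xS: "x \<in> Sk k" using w_in_Sk[OF ap(1) k2] by (simp add: x_def a_def)
  have yS: "y \<in> Sk k" using w_in_Sk[OF ap(2) k2] by (simp add: y_def a_def)
  have zS: "z \<in> Sk k" using w_in_Sk[OF cp k2] c_cases by (simp add: z_def)
  have vS: "v \<in> Sk k" by (rule v_in_Sk[OF k2])
  have xy: "x \<noteq> y" using weq[OF ap(1) ap(2)] by (simp add: x_def y_def)
  have vx: "v \<noteq> x" using weq[of 0 a] ap w0 by (simp add: x_def)
  have vy: "v \<noteq> y" using weq[of 0 "Suc a"] ap w0 by (simp add: y_def)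
  have zx: "z \<noteq> x" using weq[OF cp ap(1)] ca by (simp add: z_def x_def)
  have zy: "z \<noteq> y" using weq[OF cp ap(2)] ca by (simp add: z_def y_def)
  have Mxy: "M x y = g a" using M_next[OF ap(1)] Sucmod by (simp add: x_def y_def)
  have Myx: "M y x = cnj (g a)" using M_prev[OF ap(1)] Sucmod by (simp add: x_def y_def)
  have Myz: "M y z = g (Suc a)" using M_next[OF ap(2)] by (simp add: y_def z_def c_def)
  have Mzy: "M z y = cnj (g (Suc a))" using M_prev[OF ap(2)] by (simp add: y_def z_def c_def)
  have ga: "cmod (g a) = 1" "cmod (g (Suc a)) = 1" using g_unit ap by auto
  have Mk_eq: "Mk k i j = M i j" if "i \<noteq> x" "j \<noteq> x" for i j
    using that by (simp add: Mk_def x_def a_def)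
  have Mk_vx: "Mk k v x = gam k" by (simp add: Mk_def x_def a_def)
  have Mk_xv: "Mk k x v = cnj (gam k)" using vx by (simp add: Mk_def x_def a_def)
  have Mk_y: "Mk k y j = M y j" "Mk k j y = M j y" for j using xy vy by (auto simp: Mk_def x_def y_def a_def)
  have Mk_xy: "Mk k x y = M x y" using xy vy by (auto simp: Mk_def x_def y_def a_def)
  have wprev: "w (a - 1) = v \<or> w (a - 1) \<notin> Sk k"
  proof (cases "k = 0")
    case True then show ?thesis using w0 by (simp add: a_def)
  next
    case False
    then have "w (a - 1) \<notin> Sk k" using w_in_Sk[of "a - 1" k] ap k2 by (simp add: a_def)
    then show ?thesis by simp
  qed
  have colx: "\<forall>i\<in>Sk k. Mk k i x \<noteq> 0 \<longrightarrow> i = v \<or> i = y"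
  proof (intro ballI impI)
    fix i assume i: "i \<in> Sk k" "Mk k i x \<noteq> 0"
    show "i = v \<or> i = y"
    proof (cases "i = v")
      case False
      then have "M i x \<noteq> 0" using i(2) vx by (simp add: Mk_def x_def a_def)
      then have "i = w (a - 1) \<or> i = w (Suc a mod p)"
        using Mw_nz'[OF ap(3) ap(1)] i(1) Sk_sub by (auto simp: x_def)
      then show ?thesis using wprev i(1) Sucmod by (auto simp: y_def)
    qed simp
  qed
  have rowx: "\<forall>j\<in>Sk k. Mk k x j \<noteq> 0 \<longrightarrow> j = v \<or> j = y"
  proof (intro ballI impI)
    fix j assume j: "j \<in> Sk k" "Mk k x j \<noteq> 0"
    show "j = v \<or> j = y"
    proof (cases "j = v")
      case False
      then have "M x j \<noteq> 0" using j(2) vx by (simp add: Mk_def x_def a_def)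
      then have "j = w (a - 1) \<or> j = w (Suc a mod p)"
        using Mw_nz[OF ap(3) ap(1)] j(1) Sk_sub by (auto simp: x_def)
      then show ?thesis using wprev j(1) Sucmod by (auto simp: y_def)
    qed simp
  qed
  have rowy: "\<forall>j\<in>Sk k. Mk k y j \<noteq> 0 \<longrightarrow> j = x \<or> j = z"
  proof (intro ballI impI)
    fix j assume j: "j \<in> Sk k" "Mk k y j \<noteq> 0"
    then have "M y j \<noteq> 0" by (simp add: Mk_y)
    then show "j = x \<or> j = z"
      using Mw_nz[of "Suc a" j] ap j(1) Sk_sub by (auto simp: x_def y_def z_def c_def)
  qed
  have coly: "\<forall>i\<in>Sk k. Mk k i y \<noteq> 0 \<longrightarrow> i = x \<or> i = z"
  proof (intro ballI impI)
    fix i assume i: "i \<in> Sk k" "Mk k i y \<noteq> 0"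
    then have "M i y \<noteq> 0" by (simp add: Mk_y)
    then show "i = x \<or> i = z"
      using Mw_nz'[of "Suc a" i] ap i(1) Sk_sub by (auto simp: x_def y_def z_def c_def)
  qed
  have nz1: "Mk k y x \<noteq> 0" using Myx g_nz[OF ap(1)] by (simp add: Mk_y)
  have nz2: "Mk k x y \<noteq> 0" using Mxy g_nz[OF ap(1)] by (simp add: Mk_xy)
  have fS: "finite (Sk k)" using finite_subset[OF Sk_sub fin] .
  have cr: "rank2 (Sk k) (Sk k) (Mk k) = rank2 (Sk k - {x, y}) (Sk k - {x, y}) (contract_mat (Mk k) x y v z) + 2"
    by (rule contract_rank[OF fS xS yS vS zS xy vx vy zx zy nz1 nz2 colx rowy rowx coly])
  have SS: "Sk k - {x, y} = Sk (Suc k)" using Sk_Suc[OF k] by (simp add: x_def y_def a_def)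
  have al: "- (Mk k v x * Mk k y z / Mk k y x) = gam (Suc k)"
    using Mk_vx Mk_y Myz Myx unit_div[OF ga(1)] gam_Suc by (simp add: a_def algebra_simps)
  have be: "- (Mk k z y * Mk k x v / Mk k x y) = cnj (gam (Suc k))"
    using Mk_xv Mk_y Mzy Mk_xy Mxy unit_div2[OF ga(1)] gam_Suc by (simp add: a_def algebra_simps)
  have "rank2 (Sk (Suc k)) (Sk (Suc k)) (contract_mat (Mk k) x y v z) = rank2 (Sk (Suc k)) (Sk (Suc k)) (Nk k)"
  proof (rule rank2_cong, intro ballI)
    fix i j assume "i \<in> Sk (Suc k)" "j \<in> Sk (Suc k)"
    then have ij: "i \<noteq> x" "j \<noteq> x" using SS by auto
    have e3: "Suc (Suc a) = 2*k+3" by (simp add: a_def)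
    have zz: "z = w ((2*k+3) mod p)" unfolding z_def c_def e3 ..
    show "contract_mat (Mk k) x y v z i j = Nk k i j"
      unfolding contract_mat_def Nk_def al be Mk_eq[OF ij] zz[symmetric] by simp
  qed
  then show ?thesis using cr SS by simp
qed

definition "Fs = V - w ` {..<p}"
definition "Hs = insert v Fs"

lemma fS: "finite (Sk k)" using finite_subset[OF Sk_sub fin] .

lemma iter: "2*k+2 < p \<Longrightarrow> rank2 V V M = rank2 (Sk k) (Sk k) (Mk k) + 2*k"
proof (induction k)
  case 0
  have "Sk 0 = V" by (simp add: Sk_def)
  then show ?case using Mk0 by simp
next
  case (Suc k)
  have k: "2*k+2 < p" using Suc.prems by simp
  have IH: "rank2 V V M = rank2 (Sk k) (Sk k) (Mk k) + 2*k" using Suc.IH k by simp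
  define z where "z = w (2*k+3)"
  have zmod: "(2*k+3) mod p = 2*k+3" using Suc.prems by simp
  have z3: "2*k+3 < p" using Suc.prems by simp
  have nE: "\<not> E v z"
  proof
    assume "E v z"
    moreover have "z \<in> V" using wV[OF z3] by (simp add: z_def)
    ultimately have "z = w 1 \<or> z = w (p - 1) \<or> z = u" using nbv by blast
    moreover have "z \<noteq> w 1" using weq[OF z3, of 1] p3 by (simp add: z_def)
    moreover have "z \<noteq> w (p - 1)" using weq[OF z3, of "p - 1"] Suc.prems by (simp add: z_def)
    moreover have "z \<noteq> u" using ucyc z3 by (auto simp: z_def)
    ultimately show False by blast
  qed
  have Mvz: "M v z = 0" "M z v = 0" using nE sym M_nz by blast+
  have vz: "v \<noteq> z" using weq[OF z3, of 0] p3 w0 by (simp add: z_def)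
  have "Nk k = Mk (Suc k)"
  proof (intro ext)
    fix i j
    have e: "2 * Suc k + 1 = 2*k+3" by simp
    show "Nk k i j = Mk (Suc k) i j"
      unfolding Nk_def Mk_def zmod e z_def[symmetric] using Mvz vz by auto
  qed
  then show ?case using IH step[OF k] by simp
qed

lemma w_split: "w ` {..<p} = insert v (w ` {1..p - 1})"
proof -
  have "{..<p} = insert 0 {1..p - 1}" using p3 by auto
  then show ?thesis using w0 by simp
qed

lemma v_notin: "v \<notin> w ` {1..p - 1}"
proof
  assume "v \<in> w ` {1..p - 1}"
  then obtain x where x: "x \<in> {1..p - 1}" "v = w x" by auto
  then have "x < p" using p3 by auto
  then have "x = 0" using weq[of 0 x] x(2) w0 p3 by simp
  then show False using x(1) by simp
qed

lemma Fs_Hs: "V - w ` {1..p - 1} = Hs"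
  unfolding Hs_def Fs_def w_split using vV v_notin by auto

lemma prod_split: "(\<Prod>i<p. g i) = (\<Prod>i\<in>{..p - 2}. g i) * g (p - 1)"
proof -
  have "{..<p} = insert (p - 1) {..p - 2}" using p3 by auto
  moreover have "p - 1 \<notin> {..p - 2}" using p3 by auto
  ultimately show ?thesis by (simp add: mult.commute)
qed

lemma odd_case:
  assumes odd: "odd p"
  shows "rank2 V V M = (p - 1) + rank2 Hs Hs (\<lambda>i j. M i j + (if i = v \<and> j = v then
      (-1) ^ ((p - 1) div 2) * (\<Prod>i<p. g i) + cnj ((-1) ^ ((p - 1) div 2) * (\<Prod>i<p. g i)) else 0))"
proof -
  define m where "m = (p - 3) div 2"
  have m: "p = 2*m+3" using odd p3 unfolding m_def by presburger
  have k: "2*m+2 < p" using m by simp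
  have r1: "rank2 V V M = rank2 (Sk (Suc m)) (Sk (Suc m)) (Nk m) + 2 + 2*m"
    using iter[OF k] step[OF k] by simp
  have "Sk (Suc m) = V - w ` {1..p - 1}" unfolding Sk_def using m by simp
  then have SH: "Sk (Suc m) = Hs" using Fs_Hs by simp
  have z: "w ((2*m+3) mod p) = v" using m w0 by simp
  have gg: "gam (Suc m) = (-1) ^ ((p - 1) div 2) * (\<Prod>i<p. g i)"
  proof -
    have "{..2 * Suc m} = {..<p}" using m by auto
    moreover have "(p - 1) div 2 = Suc m" using m by simp
    ultimately show ?thesis unfolding gam_def by simp
  qed
  have "Nk m = (\<lambda>i j. M i j + (if i = v \<and> j = v then
      (-1) ^ ((p - 1) div 2) * (\<Prod>i<p. g i) + cnj ((-1) ^ ((p - 1) div 2) * (\<Prod>i<p. g i)) else 0))"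
    unfolding Nk_def z gg by (intro ext) auto
  then show ?thesis using r1 SH m by simp
qed

lemma even_case:
  assumes ev: "even p"
  shows "rank2 V V M = (p - 2) + (if (\<Prod>i<p. g i) = (-1) ^ (p div 2) then rank2 Hs Hs M
      else rank2 Fs Fs M + 2)"
proof -
  define m where "m = (p - 2) div 2"
  have m: "p = 2*m+2" "1 \<le> m" using ev p3 unfolding m_def by presburger+
  define k where "k = m - 1"
  have k: "2*k+2 < p" using m by (simp add: k_def)
  have mk: "Suc k = m" using m by (simp add: k_def)
  have r1: "rank2 V V M = rank2 (Sk m) (Sk m) (Nk k) + 2 + 2*k"
    using iter[OF k] step[OF k] mk by simp
  define z where "z = w (p - 1)"
  have e3: "2*k+3 = p - 1" using m unfolding k_def by arith
  have zmod: "w ((2*k+3) mod p) = z" unfolding e3 z_def using p3 by simp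
  define N where "N = Nk k"
  define \<omega> where "\<omega> = cnj (g (p - 1)) + gam m"
  have p1: "p - 1 < p" "0 < p - 1" using p3 by auto
  have Mvz: "M v z = cnj (g (p - 1))" using M_prev[OF p1(1)] p3 w0 by (simp add: z_def)
  have Mzv: "M z v = g (p - 1)" using M_next[OF p1(1)] p3 w0 by (simp add: z_def)
  have vz: "v \<noteq> z" using weq[OF p1(1), of 0] p3 w0 by (simp add: z_def)
  have Nvz: "N v z = \<omega>" using vz Mvz by (simp add: N_def Nk_def zmod \<omega>_def mk)
  have Nzv: "N z v = cnj \<omega>" using vz Mzv by (simp add: N_def Nk_def zmod \<omega>_def mk)
  have Nother: "N i j = M i j" if "i \<noteq> z" "j \<noteq> z" for i j
    using that by (simp add: N_def Nk_def zmod)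
  have SkV: "Sk m = V - w ` {1..p - 2}" unfolding Sk_def using m by simp
  have zS: "z \<in> Sk m" using w_in_Sk[OF p1(1), of m] m by (simp add: z_def)
  have vS: "v \<in> Sk m" using v_in_Sk[of m] m by simp
  have prev_out: "w (p - 2) \<notin> Sk m" using w_in_Sk[of "p - 2" m] m by simp
  have pm: "Suc (p - 1) mod p = 0" "p - 1 - 1 = p - 2" using p3 by auto
  have rowz: "N z j = 0" if "j \<in> Sk m" "j \<noteq> v" for j
  proof -
    have "N z j = M z j" using that vz by (simp add: N_def Nk_def zmod)
    moreover have "M z j = 0"
    proof (rule ccontr)
      assume "M z j \<noteq> 0"
      then have "j = w (p - 2) \<or> j = w 0" using Mw_nz[OF p1(2) p1(1), of j] that Sk_sub pm
        by (auto simp: z_def)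
      then show False using that prev_out w0 by auto
    qed
    ultimately show ?thesis by simp
  qed
  have colz: "N i z = 0" if "i \<in> Sk m" "i \<noteq> v" for i
  proof -
    have "N i z = M i z" using that vz by (simp add: N_def Nk_def zmod)
    moreover have "M i z = 0"
    proof (rule ccontr)
      assume "M i z \<noteq> 0"
      then have "i = w (p - 2) \<or> i = w 0" using Mw_nz'[OF p1(2) p1(1), of i] that Sk_sub pm
        by (auto simp: z_def)
      then show False using that prev_out w0 by auto
    qed
    ultimately show ?thesis by simp
  qed
  have Sz: "Sk m - {z} = Hs"
  proof -
    have "w ` {1..p - 1} = insert z (w ` {1..p - 2})"
    proof -
      have "{1..p - 1} = insert (p - 1) {1..p - 2}" using p3 by auto
      then show ?thesis by (simp add: z_def)
    qed
    then show ?thesis using SkV Fs_Hs by auto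
  qed
  have vw: "v \<in> w ` {..<p}" unfolding w_split by simp
  have Szv: "Sk m - {z, v} = Fs" using Sz vw unfolding Hs_def Fs_def by auto
  have eqw: "\<omega> = 0 \<longleftrightarrow> (\<Prod>i<p. g i) = (-1) ^ (p div 2)"
  proof -
    define s :: complex where "s = (-1) ^ m"
    define Q where "Q = (\<Prod>i\<in>{..p - 2}. g i)"
    define h where "h = g (p - 1)"
    have ss: "s * s = 1" unfolding s_def by (simp add: power_mult_distrib[symmetric])
    have hh: "h * cnj h = 1" using g_inv[OF p1(1)] by (simp add: h_def)
    have P: "(\<Prod>i<p. g i) = Q * h" using prod_split by (simp add: Q_def h_def)
    have gm: "gam m = s * Q" unfolding gam_def s_def Q_def using m by simp
    have pd: "(-1::complex) ^ (p div 2) = - s" using m by (simp add: s_def)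
    have "\<omega> = 0 \<longleftrightarrow> cnj h = - (s * Q)" unfolding \<omega>_def gm h_def by (simp add: eq_neg_iff_add_eq_0)
    also have "\<dots> \<longleftrightarrow> Q * h = - s"
    proof
      assume a: "cnj h = - (s * Q)"
      have "1 = h * cnj h" using hh by simp
      also have "\<dots> = - s * (Q * h)" using a by (simp add: algebra_simps)
      finally have "s * 1 = s * (- s * (Q * h))" by simp
      then show "Q * h = - s" using ss by (simp add: algebra_simps)
    next
      assume a: "Q * h = - s"
      have "cnj h = cnj h * (s * s)" using ss by simp
      also have "\<dots> = - (s * ((- s) * cnj h))" by (simp add: algebra_simps)
      also have "\<dots> = - (s * (Q * h * cnj h))" using a by simp
      also have "\<dots> = - (s * Q)" using hh by (simp add: algebra_simps)
      finally show "cnj h = - (s * Q)" .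
    qed
    finally show ?thesis using P pd by simp
  qed
  have fSm: "finite (Sk m)" by (rule fS)
  have zH: "z \<notin> Hs" using Sz by blast
  show ?thesis
  proof (cases "\<omega> = 0")
    case True
    have "rank2 (Sk m) (Sk m) N = rank2 (Sk m - {z}) (Sk m - {z}) N"
    proof (rule isolated_rank[OF fSm])
      show "\<forall>j\<in>Sk m. N z j = 0" using rowz Nzv True by auto
      show "\<forall>i\<in>Sk m. N i z = 0" using colz Nvz True by auto
    qed
    also have "\<dots> = rank2 Hs Hs M" unfolding Sz
    proof (rule rank2_cong, intro ballI)
      fix i j assume "i \<in> Hs" "j \<in> Hs"
      then have "i \<noteq> z" "j \<noteq> z" using zH by auto
      then show "N i j = M i j" by (rule Nother)
    qed
    finally show ?thesis using r1 True eqw m by (simp add: N_def k_def)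
  next
    case False
    have "rank2 (Sk m) (Sk m) N = rank2 (Sk m - {z, v}) (Sk m - {z, v}) N + 2"
      using zS vS vz False Nvz Nzv rowz colz by (intro pendant_rank[OF fSm]) auto
    also have "rank2 (Sk m - {z, v}) (Sk m - {z, v}) N = rank2 Fs Fs M" unfolding Szv
    proof (rule rank2_cong, intro ballI)
      fix i j assume "i \<in> Fs" "j \<in> Fs"
      then have "i \<noteq> z" "j \<noteq> z" using zH by (auto simp: Hs_def)
      then show "N i j = M i j" by (rule Nother)
    qed
    finally show ?thesis using r1 False eqw m by (simp add: N_def k_def)
  qed
qed

end

lemma card2_eq:
  assumes "finite A" "card A = 2" "a \<in> A" "b \<in> A" "a \<noteq> b"
  shows "A = {a, b}"
proof -
  have "{a, b} \<subseteq> A" using assms by auto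
  moreover have "card {a, b} = card A" using assms by simp
  ultimately show ?thesis using card_subset_eq[OF assms(1)] by metis
qed

lemma card3_eq:
  assumes "finite A" "card A = 3" "a \<in> A" "b \<in> A" "c \<in> A" "a \<noteq> b" "a \<noteq> c" "b \<noteq> c"
  shows "A = {a, b, c}"
proof -
  have "{a, b, c} \<subseteq> A" using assms by auto
  moreover have "card {a, b, c} = card A" using assms by simp
  ultimately show ?thesis using card_subset_eq[OF assms(1)] by metis
qed

lemma rot_bij:
  assumes "k0 < (p::nat)"
  shows "bij_betw (\<lambda>i. (k0 + i) mod p) {..<p} {..<p}"
proof -
  have im: "(\<lambda>i. (k0 + i) mod p) ` {..<p} = {..<p}"
  proof (intro equalityI subsetI)
    fix j assume "j \<in> (\<lambda>i. (k0 + i) mod p) ` {..<p}"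
    then show "j \<in> {..<p}" using assms by auto
  next
    fix j assume j: "j \<in> {..<p}"
    define i where "i = (j + p - k0) mod p"
    have "(k0 + i) mod p = (k0 + (j + p - k0)) mod p" unfolding i_def by (simp add: mod_add_right_eq)
    also have "k0 + (j + p - k0) = j + p" using assms by simp
    also have "(j + p) mod p = j" using j by simp
    finally have "(k0 + i) mod p = j" .
    moreover have "i \<in> {..<p}" using assms by (simp add: i_def)
    ultimately show "j \<in> (\<lambda>i. (k0 + i) mod p) ` {..<p}" by (metis imageI)
  qed
  have "inj_on (\<lambda>i. (k0 + i) mod p) {..<p}"
    by (rule eq_card_imp_inj_on) (simp_all add: im)
  then show ?thesis using im by (simp add: bij_betw_def)
qed

lemma cycle_setup:
  assumes sg: "simple_graph V E" and pc: "pendant_cycle V E cyc v"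
  defines "p \<equiv> length cyc"
  shows "\<exists>w u. w 0 = v \<and> inj_on w {..<p} \<and> w ` {..<p} = set cyc \<and> (\<forall>i<p. w i \<in> V)
    \<and> u \<in> V \<and> u \<notin> set cyc
    \<and> (\<forall>i j. 0 < i \<longrightarrow> i < p \<longrightarrow> j \<in> V \<longrightarrow> (E (w i) j \<longleftrightarrow> j = w (i - 1) \<or> j = w (Suc i mod p)))
    \<and> (\<forall>j. j \<in> V \<longrightarrow> (E v j \<longleftrightarrow> j = w 1 \<or> j = w (p - 1) \<or> j = u))
    \<and> (\<forall>\<psi>. cycle_gain \<psi> cyc = (\<Prod>i<p. \<psi> (w i) (w (Suc i mod p))))"
proof -
  have ic: "induced_cycle V E cyc" and vc: "v \<in> set cyc" and dv: "degree V E v = 3"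
    and dx: "\<forall>x\<in>set cyc - {v}. degree V E x = 2" using pc by (auto simp: pendant_cycle_def)
  have dist: "distinct cyc" and p3: "p \<ge> 3" and cV: "set cyc \<subseteq> V"
    and edg: "\<forall>i<p. E (cyc ! i) (cyc ! ((i + 1) mod p))"
    and dc: "\<forall>x\<in>set cyc. degree (set cyc) E x = 2"
    using ic by (auto simp: induced_cycle_def p_def)
  have sym: "\<forall>a b. E a b \<longrightarrow> E b a" and fin: "finite V" using sg by (auto simp: simple_graph_def)
  obtain k0 where k0: "k0 < p" "cyc ! k0 = v" using vc by (auto simp: in_set_conv_nth p_def)
  define rot where "rot = (\<lambda>i. (k0 + i) mod p)"
  define w where "w = (\<lambda>i. cyc ! rot i)"
  have bij: "bij_betw rot {..<p} {..<p}" unfolding rot_def by (rule rot_bij[OF k0(1)])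
  have w0: "w 0 = v" using k0 by (simp add: w_def rot_def)
  have injn: "inj_on (nth cyc) {..<p}" using dist by (intro inj_on_nth) (auto simp: p_def)
  have winj: "inj_on w {..<p}" unfolding w_def
    using comp_inj_on[of rot "{..<p}" "nth cyc"] bij injn by (simp add: bij_betw_def o_def)
  have nthim: "nth cyc ` {..<p} = set cyc" by (auto simp: set_conv_nth p_def)
  have wim: "w ` {..<p} = set cyc"
  proof -
    have "w ` {..<p} = nth cyc ` (rot ` {..<p})" unfolding w_def by (simp add: image_image)
    also have "rot ` {..<p} = {..<p}" using bij by (simp add: bij_betw_def)
    finally show ?thesis using nthim by simp
  qed
  have wV: "\<forall>i<p. w i \<in> V" using wim cV by auto
  have wcyc: "i < p \<Longrightarrow> w i \<in> set cyc" for i using wim by auto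
  have weq: "i < p \<Longrightarrow> j < p \<Longrightarrow> w i = w j \<longleftrightarrow> i = j" for i j using winj by (auto dest: inj_onD)
  have wnext: "w (Suc i mod p) = cyc ! ((rot i + 1) mod p)" for i
    unfolding w_def rot_def by (simp add: mod_add_left_eq mod_add_right_eq mod_Suc_eq)
  have E_next: "E (w i) (w (Suc i mod p))" if "i < p" for i
  proof -
    have "rot i < p" using k0 by (simp add: rot_def)
    then show ?thesis using edg wnext by (simp add: w_def)
  qed
  have pm: "Suc (p - 1) mod p = 0" using p3 by simp
  have nbw: "E (w i) j \<longleftrightarrow> j = w (i - 1) \<or> j = w (Suc i mod p)" if i: "0 < i" "i < p" and j: "j \<in> V" for i j
  proof -
    have e1: "E (w i) (w (Suc i mod p))" using E_next i by simp
    have "E (w (i - 1)) (w (Suc (i - 1) mod p))" using E_next[of "i - 1"] i by simp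
    moreover have "Suc (i - 1) mod p = i" using i by simp
    ultimately have "E (w (i - 1)) (w i)" by simp
    then have e2: "E (w i) (w (i - 1))" using sym i by simp
    have ne: "w (i - 1) \<noteq> w (Suc i mod p)"
    proof -
      have "i - 1 \<noteq> Suc i mod p"
      proof (cases "Suc i < p")
        case True then show ?thesis by simp
      next
        case False
        then have "Suc i = p" using i by simp
        then show ?thesis using p3 i by simp
      qed
      then show ?thesis using weq[of "i - 1" "Suc i mod p"] i p3 by simp
    qed
    have "w i \<noteq> v" using weq[of i 0] i w0 by simp
    then have "degree V E (w i) = 2" using dx wcyc[OF i(2)] by simp
    then have "card {y \<in> V. E (w i) y} = 2" by (simp add: degree_def)
    moreover have "w (i - 1) \<in> V" "w (Suc i mod p) \<in> V" using wV i p3 by auto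
    ultimately have "{y \<in> V. E (w i) y} = {w (i - 1), w (Suc i mod p)}"
      using e1 e2 ne fin by (intro card2_eq) auto
    then show ?thesis using j e1 e2 by blast
  qed
  have p1: "p - 1 < p" "1 < p" using p3 by auto
  have ev1: "E v (w 1)" using E_next[of 0] p3 w0 by simp
  have evp: "E v (w (p - 1))" using E_next[OF p1(1)] pm w0 sym by simp
  have n1p: "w 1 \<noteq> w (p - 1)" using weq[OF p1(2) p1(1)] p3 by simp
  have "card {y \<in> set cyc. E v y} = 2" using dc vc by (simp add: degree_def)
  then have ncyc: "{y \<in> set cyc. E v y} = {w 1, w (p - 1)}"
    using ev1 evp n1p wcyc p1 by (intro card2_eq) auto
  have c3: "card {y \<in> V. E v y} = 3" using dv by (simp add: degree_def)
  have "\<exists>u. u \<in> {y \<in> V. E v y} \<and> u \<noteq> w 1 \<and> u \<noteq> w (p - 1)"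
  proof (rule ccontr)
    assume "\<not> ?thesis"
    then have "{y \<in> V. E v y} \<subseteq> {w 1, w (p - 1)}" by blast
    then have "card {y \<in> V. E v y} \<le> card {w 1, w (p - 1)}" by (intro card_mono) auto
    also have "\<dots> \<le> 2" by (simp add: card_insert_if)
    finally show False using c3 by simp
  qed
  then obtain u where u: "u \<in> V" "E v u" "u \<noteq> w 1" "u \<noteq> w (p - 1)" by blast
  have nbv0: "{y \<in> V. E v y} = {w 1, w (p - 1), u}"
    using c3 fin ev1 evp u n1p wV p1 by (intro card3_eq) auto
  have ucyc: "u \<notin> set cyc" using ncyc u by blast
  have nbv: "\<forall>j. j \<in> V \<longrightarrow> (E v j \<longleftrightarrow> j = w 1 \<or> j = w (p - 1) \<or> j = u)"
    using nbv0 by blast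
  have cg: "cycle_gain \<psi> cyc = (\<Prod>i<p. \<psi> (w i) (w (Suc i mod p)))" for \<psi>
  proof -
    define f where "f = (\<lambda>j. \<psi> (cyc ! j) (cyc ! ((j + 1) mod p)))"
    have "(\<Prod>i<p. \<psi> (w i) (w (Suc i mod p))) = (\<Prod>i<p. f (rot i))"
    proof (rule prod.cong)
      fix x
      show "\<psi> (w x) (w (Suc x mod p)) = f (rot x)" unfolding f_def wnext by (simp add: w_def)
    qed simp
    also have "\<dots> = (\<Prod>j<p. f j)" by (rule prod.reindex_bij_betw[OF bij])
    finally show ?thesis by (simp add: cycle_gain_def f_def p_def)
  qed
  show ?thesis
    apply (rule exI[of _ w], rule exI[of _ u])
    using w0 winj wim wV u(1) ucyc nbw nbv cg by blast
qed

lemma diag_pivot: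
  assumes fin: "finite F" and vF: "v \<notin> F" and uF: "u \<in> F" and dnz: "N v v \<noteq> 0"
    and rowv: "\<forall>j\<in>F. j \<noteq> u \<longrightarrow> N v j = 0" and colv: "\<forall>i\<in>F. i \<noteq> u \<longrightarrow> N i v = 0"
  shows "\<exists>N'. (\<forall>i\<in>F. \<forall>j\<in>F. (i, j) \<noteq> (u, u) \<longrightarrow> N' i j = N i j)
           \<and> rank2 (insert v F) (insert v F) N = rank2 F F N' + 1"
proof -
  define X where "X = insert v F"
  define N1 where "N1 = N(u := (\<lambda>j. N u j + (- N u v / N v v) * N v j))"
  have uv: "u \<noteq> v" using uF vF by blast
  have fX: "finite X" using fin by (simp add: X_def)
  have r1: "rank2 X X N1 = rank2 X X N" unfolding N1_def using uF uv
    by (intro rank2_row_op) (auto simp: X_def)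
  have N1vv: "N1 v v \<noteq> 0" using uv dnz by (simp add: N1_def)
  have col: "\<forall>i\<in>X. i \<noteq> v \<longrightarrow> N1 i v = 0"
  proof (intro ballI impI)
    fix i assume "i \<in> X" "i \<noteq> v"
    then have iF: "i \<in> F" by (simp add: X_def)
    show "N1 i v = 0"
    proof (cases "i = u")
      case True then show ?thesis using dnz by (simp add: N1_def)
    next
      case False then show ?thesis using colv iF by (simp add: N1_def)
    qed
  qed
  have r2: "rank2 X X N1 = rank2 (X - {v}) (X - {v}) N1 + 1"
    using fX N1vv col by (intro pivot_col) (auto simp: X_def)
  have XF: "X - {v} = F" using vF by (auto simp: X_def)
  have agree: "\<forall>i\<in>F. \<forall>j\<in>F. (i, j) \<noteq> (u, u) \<longrightarrow> N1 i j = N i j"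
  proof (intro ballI impI)
    fix i j assume ij: "i \<in> F" "j \<in> F" "(i, j) \<noteq> (u, u)"
    show "N1 i j = N i j"
    proof (cases "i = u")
      case True
      then have "j \<noteq> u" using ij by simp
      then have "N v j = 0" using rowv ij by blast
      then show ?thesis by (simp add: N1_def)
    next
      case False then show ?thesis by (simp add: N1_def)
    qed
  qed
  show ?thesis using agree r1 r2 XF by (intro exI[of _ N1]) (simp add: X_def)
qed

lemma unit_gain_one: "unit_gain E (\<lambda>_ _. 1)"
  by (simp add: unit_gain_def)

lemma adj_one: "gain_adj_mat E (\<lambda>_ _. 1) = adj_mat E"
  by (intro ext) (simp add: gain_adj_mat_def adj_mat_def)

theorem theorem4p4:
  fixes V :: "'a set" and E :: "'a \<Rightarrow> 'a \<Rightarrow> bool" and \<phi> :: "'a \<Rightarrow> 'a \<Rightarrow> complex"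
    and cyc :: "'a list" and v :: 'a
  assumes "simple_graph V E" and "unit_gain E \<phi>"
    and "pendant_cycle V E cyc v"
    and "int (gain_rank V E \<phi>) = int (graph_rank V E) - 2 * theta V E"
  defines "p \<equiv> length cyc"
    and "F \<equiv> V - set cyc"
    and "H \<equiv> (V - set cyc) \<union> {v}"
  shows "(type_A \<phi> cyc \<and> p mod 4 = 2)
    \<and> (int (gain_rank H E \<phi>) = int (graph_rank H E) - 2 * theta H E
       \<and> int (gain_rank F E \<phi>) = int (graph_rank F E) - 2 * theta F E)
    \<and> (int (gain_rank V E \<phi>) = int p - 2 + int (gain_rank F E \<phi>)
       \<and> gain_rank F E \<phi> = gain_rank H E \<phi>
       \<and> graph_rank V E = p + graph_rank H E
       \<and> graph_rank F E = graph_rank H E)"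
proof -
  note sg = assms(1) and ugp = assms(2) and pc = assms(3) and hyp = assms(4)
  obtain w u where W: "w 0 = v" "inj_on w {..<p}" "w ` {..<p} = set cyc" "\<forall>i<p. w i \<in> V"
    "u \<in> V" "u \<notin> set cyc"
    "\<forall>i j. 0 < i \<longrightarrow> i < p \<longrightarrow> j \<in> V \<longrightarrow> (E (w i) j \<longleftrightarrow> j = w (i - 1) \<or> j = w (Suc i mod p))"
    "\<forall>j. j \<in> V \<longrightarrow> (E v j \<longleftrightarrow> j = w 1 \<or> j = w (p - 1) \<or> j = u)"
    "\<forall>\<psi>. cycle_gain \<psi> cyc = (\<Prod>i<p. \<psi> (w i) (w (Suc i mod p)))"
  proof -
    have ex: "\<exists>w u. w 0 = v \<and> inj_on w {..<p} \<and> w ` {..<p} = set cyc \<and> (\<forall>i<p. w i \<in> V)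
      \<and> u \<in> V \<and> u \<notin> set cyc
      \<and> (\<forall>i j. 0 < i \<longrightarrow> i < p \<longrightarrow> j \<in> V \<longrightarrow> (E (w i) j \<longleftrightarrow> j = w (i - 1) \<or> j = w (Suc i mod p)))
      \<and> (\<forall>j. j \<in> V \<longrightarrow> (E v j \<longleftrightarrow> j = w 1 \<or> j = w (p - 1) \<or> j = u))
      \<and> (\<forall>\<psi>. cycle_gain \<psi> cyc = (\<Prod>i<p. \<psi> (w i) (w (Suc i mod p))))"
      using cycle_setup[OF sg pc] unfolding p_def .
    show ?thesis using ex
      apply (elim exE conjE)
      apply (rule that)
      apply assumption+
      done
  qed
  have p3: "p \<ge> 3" using pc by (simp add: pendant_cycle_def induced_cycle_def p_def)
  interpret PF: pcyc V E \<phi> w p v u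
    using sg ugp p3 W by unfold_locales auto
  interpret PG: pcyc V E "\<lambda>_ _. 1" w p v u
    using sg unit_gain_one p3 W by unfold_locales auto
  define MA where "MA = adj_mat E"
  define MB where "MB = gain_adj_mat E \<phi>"
  have PGM: "PG.M = MA" by (simp add: PG.M_def MA_def adj_one)
  have PFM: "PF.M = MB" by (simp add: PF.M_def MB_def)
  have FF: "PF.Fs = F" "PG.Fs = F" using W(3) by (simp_all add: PF.Fs_def PG.Fs_def F_def)
  have HH: "PF.Hs = H" "PG.Hs = H" using FF by (auto simp: PF.Hs_def PG.Hs_def H_def F_def)
  have gr: "graph_rank S E = rank2 S S MA" for S by (simp add: graph_rank_def mat_rank_rank2 MA_def)
  have br: "gain_rank S E \<phi> = rank2 S S MB" for S by (simp add: gain_rank_def mat_rank_rank2 MB_def)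
  have sym: "\<forall>a b. E a b \<longrightarrow> E b a" and irr: "\<forall>a. \<not> E a a" and finV: "finite V"
    using sg by (auto simp: simple_graph_def)
  have finF: "finite F" "finite H" "finite (F - {u})" using finV by (auto simp: F_def H_def)
  have uF: "u \<in> F" using W(5,6) by (simp add: F_def)
  have vcyc: "v \<in> set cyc" using W(1,3) p3 by force
  have vF: "v \<notin> F" using vcyc by (simp add: F_def)
  have Hins: "H = insert v F" using PF.vV by (auto simp: H_def F_def)
  have pA: "\<forall>i\<in>S. \<forall>j\<in>S. MA i j \<noteq> 0 \<longleftrightarrow> E i j" for S by (simp add: MA_def adj_mat_def)
  have pB: "\<forall>i\<in>S. \<forall>j\<in>S. MB i j \<noteq> 0 \<longleftrightarrow> E i j" for S using PF.M_nz PFM by simp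
  have L1: "int (rank2 S S MA) \<le> int (rank2 S S MB) + 2 * theta S E" if "finite S" for S
    by (rule lower_bound[OF sym irr that pA pB])
  have w1: "w 1 \<in> set cyc" "w 1 \<in> V" using W(3,4) p3 by auto
  have reachv0: "\<forall>j. p - 1 - j = m \<longrightarrow> 2 \<le> j \<longrightarrow> j < p \<longrightarrow> reach (V - {w 1}) E (w j) v" for m
  proof (induction m)
    case 0
    show ?case
    proof (intro allI impI)
      fix j assume h: "p - 1 - j = 0" "2 \<le> j" "j < p"
      then have j: "j = p - 1" by simp
      have "E (w (p - 1)) (w (Suc (p - 1) mod p))" using PF.E_next[of "p - 1"] p3 by simp
      moreover have "Suc (p - 1) mod p = 0" using p3 by simp
      ultimately have e: "E (w j) v" using j W(1) by simp
      have a1: "w j \<noteq> w 1" using PF.weq[of j 1] h by simp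
      have a2: "v \<noteq> w 1" using PF.weq[of 0 1] p3 W(1) by simp
      have "w j \<in> V - {w 1}" "v \<in> V - {w 1}" using a1 a2 PF.inV[OF e] by auto
      then show "reach (V - {w 1}) E (w j) v" using e by (rule reach_edge)
    qed
  next
    case (Suc m)
    show ?case
    proof (intro allI impI)
      fix j assume h: "p - 1 - j = Suc m" "2 \<le> j" "j < p"
      have j1: "Suc j < p" using h by simp
      have IH: "reach (V - {w 1}) E (w (Suc j)) v"
        using Suc.IH h j1 by simp
      have "E (w j) (w (Suc j mod p))" by (rule PF.E_next) (use j1 in simp)
      moreover have "Suc j mod p = Suc j" using j1 by simp
      ultimately have e: "E (w j) (w (Suc j))" by simp
      have a1: "w j \<noteq> w 1" using PF.weq[of j 1] h by simp
      have a2: "w (Suc j) \<noteq> w 1" using PF.weq[of "Suc j" 1] j1 h by simp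
      have "w j \<in> V - {w 1}" "w (Suc j) \<in> V - {w 1}" using a1 a2 PF.inV[OF e] by auto
      then have "reach (V - {w 1}) E (w j) (w (Suc j))" using e by (rule reach_edge)
      then show "reach (V - {w 1}) E (w j) v" by (rule reach_trans[OF _ IH])
    qed
  qed
  have reachv: "reach (V - {w 1}) E (w j) v" if "2 \<le> j" "j < p" for j
    using reachv0[of "p - 1 - j"] that by simp
  have n1: "v \<in> nbrs V E (w 1)" "w 2 \<in> nbrs V E (w 1)"
  proof -
    have "E (w 1) v" using W(7) PF.vV p3 W(1) by auto
    then show "v \<in> nbrs V E (w 1)" using PF.vV by (simp add: nbrs_def)
    have "E (w 1) (w (Suc 1 mod p))" by (rule PF.E_next) (use p3 in simp)
    moreover have "Suc 1 mod p = 2" using p3 by simp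
    ultimately have "E (w 1) (w 2)" by simp
    then show "w 2 \<in> nbrs V E (w 1)" using p3 PF.inV by (simp add: nbrs_def)
  qed
  have v2: "v \<noteq> w 2" using PF.weq[of 0 2] p3 W(1) by simp
  have tV1: "theta (V - {w 1}) E \<le> theta V E - 1"
    using reach_sym[OF sym reachv[of 2]] p3 n1 v2 w1 by (intro theta_strict[OF sym _ finV]) auto
  have tF1: "theta F E \<le> theta (V - {w 1}) E"
    using w1 finV by (intro theta_subset[OF sym]) (auto simp: F_def)
  have tG: "theta V E \<ge> theta F E + 1" using tV1 tF1 by linarith
  have nbH: "nbrs H E v = {u}"
  proof -
    have "y \<in> nbrs H E v \<longleftrightarrow> y = u" for y
    proof
      assume "y \<in> nbrs H E v"
      then have y: "y \<in> H" "E v y" by (auto simp: nbrs_def)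
      then have "y \<in> V" using PF.vV by (auto simp: H_def)
      then have "y = w 1 \<or> y = w (p - 1) \<or> y = u" using W(8) y by blast
      moreover have "w (p - 1) \<in> set cyc" using W(3) p3 by auto
      moreover have "y \<noteq> v" using y irr by auto
      moreover have "w 1 \<noteq> v" "w (p - 1) \<noteq> v" using PF.weq[of 1 0] PF.weq[of "p - 1" 0] p3 W(1) by auto
      ultimately show "y = u" using y(1) w1 by (auto simp: H_def)
    next
      assume "y = u"
      then show "y \<in> nbrs H E v" using W(8) W(5) uF Hins by (auto simp: nbrs_def)
    qed
    then show ?thesis by blast
  qed
  have tH: "theta H E \<le> theta F E"
  proof -
    have "v \<in> H" by (simp add: Hins)
    then have "theta H E \<le> theta (H - {v}) E" using theta_pendant_lower[OF sym irr _ finF(2) nbH] by simp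
    moreover have "H - {v} = F" using Hins vF by auto
    ultimately show ?thesis by simp
  qed
  have tFu: "theta (F - {u}) E \<le> theta F E" by (rule theta_mono1[OF sym finF(1)])
  have rFH: "rank2 F F MA \<le> rank2 H H MA" "rank2 F F MB \<le> rank2 H H MB"
    using finF Hins by (auto intro: rank2_mono_set)
  have rHF: "rank2 H H MA \<le> rank2 F F MA + 2"
  proof -
    have "rank2 H H MA \<le> rank2 (H - {v}) (H - {v}) MA + 2" by (rule rank2_del_vertex(1)[OF finF(2)])
    moreover have "H - {v} = F" using Hins vF by auto
    ultimately show ?thesis by simp
  qed
  have vrow: "MB v j = 0 \<and> MA v j = 0 \<and> MB j v = 0 \<and> MA j v = 0" if "j \<in> F" "j \<noteq> u" for j
  proof -
    have "j \<in> V" "j \<notin> set cyc" using that by (auto simp: F_def)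
    moreover have "w 1 \<in> set cyc" "w (p - 1) \<in> set cyc" using W(3) p3 by auto
    ultimately have "\<not> E v j" using W(8) that(2) by auto
    then show ?thesis using pA[of UNIV] pB[of UNIV] sym by blast
  qed
  have uH: "u \<in> H" "v \<in> H" using uF Hins by auto
  have Evu: "E v u" using W(8) W(5) by blast
  have uv: "u \<noteq> v" using uF vF by blast
  have HvuF: "H - {v, u} = F - {u}" using Hins vF by auto
  have L1F: "int (rank2 F F MA) \<le> int (rank2 F F MB) + 2 * theta F E" by (rule L1[OF finF(1)])
  have L1H: "int (rank2 H H MA) \<le> int (rank2 H H MB) + 2 * theta H E" by (rule L1[OF finF(2)])
  have L1Fu: "int (rank2 (F - {u}) (F - {u}) MA) \<le> int (rank2 (F - {u}) (F - {u}) MB) + 2 * theta (F - {u}) E"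
    by (rule L1[OF finF(3)])
  have hyp2: "int (rank2 V V MB) = int (rank2 V V MA) - 2 * theta V E" using hyp by (simp add: gr br)
  have cgF: "cycle_gain \<phi> cyc = (\<Prod>i<p. PF.g i)" using W(9) by (simp add: PF.g_def)
  have cgG: "(\<Prod>i<p. PG.g i) = 1" by (simp add: PG.g_def)
  show ?thesis
  proof (cases "even p")
    case True
    have eF: "rank2 V V MB = (p - 2) + (if cycle_gain \<phi> cyc = (-1) ^ (p div 2) then rank2 H H MB
        else rank2 F F MB + 2)"
      using PF.even_case[OF True] unfolding PFM FF HH cgF[symmetric] .
    have eG: "rank2 V V MA = (p - 2) + (if (1::complex) = (-1) ^ (p div 2) then rank2 H H MA
        else rank2 F F MA + 2)"
      using PG.even_case[OF True] unfolding PGM FF HH cgG .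
    have AF: "cycle_gain \<phi> cyc = (-1) ^ (p div 2)"
    proof (rule ccontr)
      assume nA: "cycle_gain \<phi> cyc \<noteq> (-1) ^ (p div 2)"
      then have bV: "rank2 V V MB = (p - 2) + rank2 F F MB + 2" using eF by simp
      show False
      proof (cases "(1::complex) = (-1) ^ (p div 2)")
        case True
        then have "rank2 V V MA = (p - 2) + rank2 H H MA" using eG by simp
        then show False using bV hyp2 tG tH rHF L1F by linarith
      next
        case False
        then have "rank2 V V MA = (p - 2) + rank2 F F MA + 2" using eG by simp
        then show False using bV hyp2 tG L1F by linarith
      qed
    qed
    have bV: "rank2 V V MB = (p - 2) + rank2 H H MB" using eF AF by simp
    have AG: "(1::complex) \<noteq> (-1) ^ (p div 2)"
    proof
      assume "(1::complex) = (-1) ^ (p div 2)"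
      then have "rank2 V V MA = (p - 2) + rank2 H H MA" using eG by simp
      then show False using bV hyp2 tG tH L1H by linarith
    qed
    have rV: "rank2 V V MA = (p - 2) + rank2 F F MA + 2" using eG AG by simp
    have eqs: "rank2 H H MB = rank2 F F MB" "int (rank2 F F MB) = int (rank2 F F MA) - 2 * theta F E"
      "rank2 F F MA = rank2 H H MA" "theta H E = theta F E"
      using bV rV hyp2 tG tH L1F L1H rFH by linarith+
    have pm: "p mod 4 = 2"
    proof -
      have "odd (p div 2)" using AG by (metis neg_one_even_power)
      then show ?thesis using True by presburger
    qed
    have tA: "type_A \<phi> cyc" using True AF by (simp add: type_A_def p_def)
    show ?thesis unfolding gr br using tA pm eqs bV rV hyp2 p3 by auto
  next
    case False
    define s :: complex where "s = (-1) ^ ((p - 1) div 2)"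
    define dF where "dF = s * cycle_gain \<phi> cyc + cnj (s * cycle_gain \<phi> cyc)"
    define dG where "dG = s + cnj s"
    define NF where "NF = (\<lambda>i j. MB i j + (if i = v \<and> j = v then dF else 0))"
    define NG where "NG = (\<lambda>i j. MA i j + (if i = v \<and> j = v then dG else 0))"
    have oF: "rank2 V V MB = (p - 1) + rank2 H H NF"
      using PF.odd_case[OF False] unfolding PFM HH cgF[symmetric] s_def[symmetric] dF_def[symmetric]
      by (simp add: NF_def)
    have NGe: "NG = (\<lambda>i j. MA i j + (if i = v \<and> j = v then s * 1 + cnj (s * 1) else 0))"
      unfolding NG_def dG_def by (simp only: mult_1_right)
    have oG: "rank2 V V MA = (p - 1) + rank2 H H NG"
      using PG.odd_case[OF False] unfolding PGM HH cgG s_def[symmetric] NGe[symmetric] .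
    have dG0: "dG \<noteq> 0"
    proof -
      have "s = 1 \<or> s = -1" unfolding s_def
        by (cases "even ((p - 1) div 2)") (simp_all add: neg_one_even_power neg_one_odd_power)
      then show ?thesis unfolding dG_def by auto
    qed
    have MAvv: "MA v v = 0" "MB v v = 0" using pA[of UNIV] pB[of UNIV] irr by blast+
    have "\<exists>N'. (\<forall>i\<in>F. \<forall>j\<in>F. (i, j) \<noteq> (u, u) \<longrightarrow> N' i j = NG i j)
           \<and> rank2 (insert v F) (insert v F) NG = rank2 F F N' + 1"
      using vrow MAvv dG0 vF by (intro diag_pivot[OF finF(1) vF uF]) (auto simp: NG_def)
    then obtain A' where A0: "\<forall>i\<in>F. \<forall>j\<in>F. (i, j) \<noteq> (u, u) \<longrightarrow> A' i j = NG i j"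
      "rank2 (insert v F) (insert v F) NG = rank2 F F A' + 1"
      apply (elim exE conjE) apply (rule that) apply assumption+ done
    have A': "\<forall>i\<in>F. \<forall>j\<in>F. (i, j) \<noteq> (u, u) \<longrightarrow> A' i j = MA i j"
      "rank2 H H NG = rank2 F F A' + 1" using A0 vF Hins by (auto simp: NG_def)
    have rA1: "rank2 F F A' \<le> rank2 (F - {u}) (F - {u}) A' + 2" by (rule rank2_del_vertex(1)[OF finF(1)])
    have rA2: "rank2 (F - {u}) (F - {u}) A' = rank2 (F - {u}) (F - {u}) MA"
      by (rule rank2_cong) (use A'(1) in auto)
    have Xlow: "rank2 H H NF \<ge> rank2 (F - {u}) (F - {u}) MB + 1" and
      Xcase: "dF = 0 \<Longrightarrow> rank2 H H NF = rank2 (F - {u}) (F - {u}) MB + 2"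
    proof -
      have pend: "rank2 H H MB = rank2 (F - {u}) (F - {u}) MB + 2" if "dF = 0"
      proof -
        have "rank2 H H MB = rank2 (H - {v, u}) (H - {v, u}) MB + 2"
          using uH uv Evu sym vrow MAvv pB[of UNIV] by (intro pendant_rank[OF finF(2)]) (auto simp: Hins)
        then show ?thesis using HvuF by simp
      qed
      have NF0: "dF = 0 \<Longrightarrow> NF = MB" by (intro ext) (simp add: NF_def)
      show "dF = 0 \<Longrightarrow> rank2 H H NF = rank2 (F - {u}) (F - {u}) MB + 2" using pend NF0 by simp
      show "rank2 H H NF \<ge> rank2 (F - {u}) (F - {u}) MB + 1"
      proof (cases "dF = 0")
        case True then show ?thesis using pend NF0 by simp
      next
        case False
        have "\<exists>N'. (\<forall>i\<in>F. \<forall>j\<in>F. (i, j) \<noteq> (u, u) \<longrightarrow> N' i j = NF i j)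
               \<and> rank2 (insert v F) (insert v F) NF = rank2 F F N' + 1"
          using vrow MAvv False vF by (intro diag_pivot[OF finF(1) vF uF]) (auto simp: NF_def)
        then obtain B' where B0: "\<forall>i\<in>F. \<forall>j\<in>F. (i, j) \<noteq> (u, u) \<longrightarrow> B' i j = NF i j"
          "rank2 (insert v F) (insert v F) NF = rank2 F F B' + 1"
          apply (elim exE conjE) apply (rule that) apply assumption+ done
        have B': "\<forall>i\<in>F. \<forall>j\<in>F. (i, j) \<noteq> (u, u) \<longrightarrow> B' i j = MB i j"
          "rank2 H H NF = rank2 F F B' + 1" using B0 vF Hins by (auto simp: NF_def)
        have "rank2 (F - {u}) (F - {u}) B' \<le> rank2 F F B'" by (rule rank2_del_vertex(2)[OF finF(1)])
        moreover have "rank2 (F - {u}) (F - {u}) B' = rank2 (F - {u}) (F - {u}) MB"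
          by (rule rank2_cong) (use B'(1) in auto)
        ultimately show ?thesis using B'(2) by simp
      qed
    qed
    have th_u: "theta (F - {u}) E \<le> theta F E" by (rule tFu)
    have eq1: "rank2 F F A' = rank2 (F - {u}) (F - {u}) MA + 2"
      using oF oG A'(2) hyp2 tG Xlow L1Fu th_u rA1 rA2 by linarith
    have eq2: "rank2 H H NF = rank2 (F - {u}) (F - {u}) MB + 1"
      using oF oG A'(2) hyp2 tG Xlow L1Fu th_u rA1 rA2 by linarith
    have eq3: "int (rank2 (F - {u}) (F - {u}) MB) = int (rank2 (F - {u}) (F - {u}) MA) - 2 * theta F E"
      using oF oG A'(2) hyp2 tG Xlow L1Fu th_u rA1 rA2 by linarith
    show ?thesis
    proof (cases "dF = 0")
      case True
      then show ?thesis using Xcase eq2 by simp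
    next
      case dnz: False
      have "\<exists>N'. (\<forall>i\<in>F. \<forall>j\<in>F. (i, j) \<noteq> (u, u) \<longrightarrow> N' i j = NF i j)
             \<and> rank2 (insert v F) (insert v F) NF = rank2 F F N' + 1"
        using vrow MAvv dnz vF by (intro diag_pivot[OF finF(1) vF uF]) (auto simp: NF_def)
      then obtain B' where B0: "\<forall>i\<in>F. \<forall>j\<in>F. (i, j) \<noteq> (u, u) \<longrightarrow> B' i j = NF i j"
        "rank2 (insert v F) (insert v F) NF = rank2 F F B' + 1"
        apply (elim exE conjE) apply (rule that) apply assumption+ done
      have B': "\<forall>i\<in>F. \<forall>j\<in>F. (i, j) \<noteq> (u, u) \<longrightarrow> B' i j = MB i j"
        "rank2 H H NF = rank2 F F B' + 1" using B0 vF Hins by (auto simp: NF_def)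
      have hermA: "\<forall>i\<in>F. \<forall>j\<in>F. MA i j = cnj (MA j i)"
        using sym by (auto simp: MA_def adj_mat_def)
      have rFeq: "rank2 F F MA = rank2 (F - {u}) (F - {u}) MA + 2"
        using herm_extend[OF finF(1) uF hermA A'(1) eq1] .
      have cc: "rank2 F F MB \<le> rank2 F F B' + 1"
        by (rule rank2_col_change[OF finF(1), where u = u]) (use B'(1) in auto)
      show ?thesis using rFeq cc B'(2) eq2 eq3 L1F by linarith
    qed
  qed
qed

end
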